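(* Consider the Hubbard model described in the context, and take a constant $\nu\in(0,1)$. Suppose that a finite-energy state $|\Phi\rangle$ with $N_e$ electrons is an eigenstate of $(\mathbf{S}_{\mathrm{tot}})^2$ with total spin $S_{\mathrm{tot}}\le\nu S_{\max}$, where $S_{\max}=N_e/2$. Write $|\Phi\rangle=\sum_{C,\boldsymbol{\sigma}}\psi_{C,\boldsymbol{\sigma}}\bigl(\prod_{x\in C}a^\dagger_{x,\sigma(x)}\bigr)|\Phi_{\mathrm{vac}}\rangle$, as explained in the context. Let $C$ be such that $\psi_{C,\boldsymbol{\sigma}}\neq0$ for some $\boldsymbol{\sigma}$. Decompose $C$ into its connected components (with respect to the bonds in $\mathcal{E}$) as $C=C_0\cup C_1\cup\cdots\cup C_n$, where $|C_0|\ge|C_\ell|$ for all $\ell$. Then $\sum_{\ell=1}^n|C_\ell|\ge\frac{N_e}{2}(1-\nu)$.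
   Context: Lattice: $\mathcal{M}$ is a finite set of sites. $\mathcal{B}$ is a set of ordered pairs $(x,y)$ of distinct sites (bonds) such that for any $x,y$ at most one of $(x,y),(y,x)$ lies in $\mathcal{B}$. Put $\mathcal{E}=\mathcal{B}\cup\{(y,x):(x,y)\in\mathcal{B}\}$. $\mathcal{M}$ is connected via bonds, and each site has exactly $\zeta$ sites $y$ with $(x,y)\in\mathcal{E}$. For each $(x,y)\in\mathcal{B}$ introduce two additional sites $u(x,y),\bar u(x,y)$; let $\mathcal{O}$ and $\bar{\mathcal{O}}$ be the sets of all $u(x,y)$ and all $\bar u(x,y)$ respectively, and let $\Lambda=\mathcal{M}\cup\mathcal{O}\cup\bar{\mathcal{O}}$. Operators: $c_{z,\sigma}$ ($z\in\Lambda$, $\sigma\in\{\uparrow,\downarrow\}$) are the fermion annihilation operators, $n_{z,\sigma}=c^\dagger_{z,\sigma}c_{z,\sigma}$, and $|\Phi_{\mathrm{vac}}\rangle$ is the vacuum. Fix $\mu>0$. For $x\in\mathcal{M}$, $a_{x,\sigma}=(1+2\zeta\mu^2)^{-1/2}\{c_{x,\sigma}+\mu\sum_{y:(x,y)\in\mathcal{B}}(c_{u(x,y),\sigma}-c_{\bar u(x,y),\sigma})+\mu\sum_{y:(y,x)\in\mathcal{B}}(c_{u(y,x),\sigma}+c_{\bar u(y,x),\sigma})\}$. For $u=u(x,y)$, $b_{u,\sigma}=c_{u,\sigma}-\mu(c_{x,\sigma}+c_{y,\sigma})$; for $\bar u=\bar u(x,y)$, $b_{\bar u,\sigma}=c_{\bar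 u,\sigma}+\mu(c_{x,\sigma}-c_{y,\sigma})$. Hamiltonian, with $s,t,U>0$: $H=t\sum_{(x,y)\in\mathcal{E},\sigma}a^\dagger_{x,\sigma}a_{y,\sigma}+s\sum_{v\in\mathcal{O}\cup\bar{\mathcal{O}},\sigma}b^\dagger_{v,\sigma}b_{v,\sigma}+U\sum_{z\in\Lambda}n_{z,\uparrow}n_{z,\downarrow}$. It acts on the $N_e$-electron space with $N_e\le|\mathcal{M}|$. A fixed state $|\Phi\rangle$ (independent of $s,U$) is a finite-energy state if $\lim_{s\uparrow\infty}\lim_{U\uparrow\infty}\langle\Phi|H|\Phi\rangle<\infty$. Every finite-energy state can be expanded uniquely as $|\Phi\rangle=\sum_{C,\boldsymbol{\sigma}}\psi_{C,\boldsymbol{\sigma}}\bigl(\prod_{x\in C}a^\dagger_{x,\sigma(x)}\bigr)|\Phi_{\mathrm{vac}}\rangle$. Here $C$ ranges over subsets of $\mathcal{M}$ with $|C|=N_e$, $\boldsymbol{\sigma}=(\sigma(x))_{x\in C}\in\{\uparrow,\downarrow\}^C$, the product is ordered by a fixed ordering of $\mathcal{M}$, and $\psi_{C,\boldsymbol{\sigma}}\in\mathbb{C}$. Spin: $S^+_z=c^\dagger_{z,\uparrow}c_{z,\downarrow}$, $S^-_z=c^\dagger_{z,\downarrow}c_{z,\uparrow}$, $S^{(3)}_z=\tfrac12(n_{z,\uparrow}-n_{z,\downarrow})$, $S^{(1)}_z=(S^+_z+S^-_z)/2$, $S^{(2)}_z=(S^+_z-S^-_z)/(2i)$. The total spin is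 $\mathbf{S}_{\mathrm{tot}}=\sum_{z\in\Lambda}\mathbf{S}_z$, with eigenvalues of $(\mathbf{S}_{\mathrm{tot}})^2$ written $S_{\mathrm{tot}}(S_{\mathrm{tot}}+1)$. *)

theory Defs
  imports "HOL-Library.FuncSet" Complex_Main
begin

(* Sites of Lambda: Ms x (x in M), Uo x y = u(x,y), Ub x y = ubar(x,y) *)
datatype 'a site = Ms 'a | Uo 'a 'a | Ub 'a 'a
datatype spin = Up | Dn

type_synonym 'a mode = "'a site \<times> spin"
(* Fock space: amplitudes on the occupation basis |S>, S a finite set of modes,
   |S> = c^dag_{m1} ... c^dag_{mk} |vac> with m1 < ... < mk *)
type_synonym 'a fock = "'a mode set \<Rightarrow> complex"

definition edges :: "('a \<times> 'a) set \<Rightarrow> ('a \<times> 'a) set" where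
  "edges B = B \<union> {(y, x). (x, y) \<in> B}"

definition lattice :: "'a set \<Rightarrow> ('a \<times> 'a) set \<Rightarrow> nat \<Rightarrow> bool" where
  "lattice M B \<zeta> \<longleftrightarrow> finite M \<and> B \<subseteq> M \<times> M
     \<and> (\<forall>x y. (x, y) \<in> B \<longrightarrow> x \<noteq> y)
     \<and> (\<forall>x y. (x, y) \<in> B \<longrightarrow> (y, x) \<notin> B)
     \<and> (\<forall>x\<in>M. \<forall>y\<in>M. (x, y) \<in> (edges B)\<^sup>*)
     \<and> (\<forall>x\<in>M. card {y. (x, y) \<in> edges B} = \<zeta>)"

definition Osites :: "('a \<times> 'a) set \<Rightarrow> 'a site set" where
  "Osites B = {Uo x y | x y. (x, y) \<in> B}"

definition Obsites :: "('a \<times> 'a) set \<Rightarrow> 'a site set" where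
  "Obsites B = {Ub x y | x y. (x, y) \<in> B}"

definition Lam :: "'a set \<Rightarrow> ('a \<times> 'a) set \<Rightarrow> 'a site set" where
  "Lam M B = Ms ` M \<union> Osites B \<union> Obsites B"

definition modes :: "'a set \<Rightarrow> ('a \<times> 'a) set \<Rightarrow> 'a mode set" where
  "modes M B = Lam M B \<times> {Up, Dn}"

fun site_less :: "'a::linorder site \<Rightarrow> 'a site \<Rightarrow> bool" where
  "site_less (Ms x) (Ms y) = (x < y)"
| "site_less (Ms x) _ = True"
| "site_less (Uo a b) (Ms _) = False"
| "site_less (Uo a b) (Uo c d) = (a < c \<or> (a = c \<and> b < d))"
| "site_less (Uo a b) (Ub _ _) = True"
| "site_less (Ub a b) (Ub c d) = (a < c \<or> (a = c \<and> b < d))"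
| "site_less (Ub a b) _ = False"

definition mode_less :: "'a::linorder mode \<Rightarrow> 'a mode \<Rightarrow> bool" where
  "mode_less m m' \<longleftrightarrow> site_less (fst m) (fst m') \<or>
     (fst m = fst m' \<and> snd m = Up \<and> snd m' = Dn)"

definition fsign :: "'a::linorder mode set \<Rightarrow> 'a mode \<Rightarrow> complex" where
  "fsign T m = (-1) ^ card {m' \<in> T. mode_less m' m}"

definition cr :: "'a::linorder mode \<Rightarrow> 'a fock \<Rightarrow> 'a fock" where
  "cr m \<Phi> = (\<lambda>S. if m \<in> S then fsign (S - {m}) m * \<Phi> (S - {m}) else 0)"

definition an :: "'a::linorder mode \<Rightarrow> 'a fock \<Rightarrow> 'a fock" where
  "an m \<Phi> = (\<lambda>S. if m \<notin> S then fsign S m * \<Phi> (insert m S) else 0)"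

definition numop :: "'a::linorder mode \<Rightarrow> 'a fock \<Rightarrow> 'a fock" where
  "numop m \<Phi> = cr m (an m \<Phi>)"

definition vac :: "'a fock" where
  "vac = (\<lambda>S. if S = {} then 1 else 0)"

definition ann :: "'a::linorder site set \<Rightarrow> ('a site \<Rightarrow> real) \<Rightarrow> spin \<Rightarrow> 'a fock \<Rightarrow> 'a fock" where
  "ann L f \<sigma> \<Phi> = (\<lambda>S. \<Sum>z\<in>L. complex_of_real (f z) * an (z, \<sigma>) \<Phi> S)"

definition cre :: "'a::linorder site set \<Rightarrow> ('a site \<Rightarrow> real) \<Rightarrow> spin \<Rightarrow> 'a fock \<Rightarrow> 'a fock" where
  "cre L f \<sigma> \<Phi> = (\<lambda>S. \<Sum>z\<in>L. complex_of_real (f z) * cr (z, \<sigma>) \<Phi> S)"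

definition acoef :: "real \<Rightarrow> nat \<Rightarrow> ('a \<times> 'a) set \<Rightarrow> 'a \<Rightarrow> 'a site \<Rightarrow> real" where
  "acoef \<mu> \<zeta> B x z = (1 / sqrt (1 + 2 * real \<zeta> * \<mu>\<^sup>2)) *
     (case z of
        Ms w \<Rightarrow> (if w = x then 1 else 0)
      | Uo p q \<Rightarrow> (if (p, q) \<in> B \<and> p = x then \<mu> else if (p, q) \<in> B \<and> q = x then \<mu> else 0)
      | Ub p q \<Rightarrow> (if (p, q) \<in> B \<and> p = x then - \<mu> else if (p, q) \<in> B \<and> q = x then \<mu> else 0))"

definition bcoef :: "real \<Rightarrow> 'a site \<Rightarrow> 'a site \<Rightarrow> real" where
  "bcoef \<mu> v z = (case v of
        Ms _ \<Rightarrow> 0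
      | Uo p q \<Rightarrow> (if z = Uo p q then 1 else if z = Ms p \<or> z = Ms q then - \<mu> else 0)
      | Ub p q \<Rightarrow> (if z = Ub p q then 1 else if z = Ms p then \<mu> else if z = Ms q then - \<mu> else 0))"

definition Ham :: "'a::linorder set \<Rightarrow> ('a \<times> 'a) set \<Rightarrow> nat \<Rightarrow> real \<Rightarrow> real \<Rightarrow> real \<Rightarrow> real
                   \<Rightarrow> 'a fock \<Rightarrow> 'a fock" where
  "Ham M B \<zeta> \<mu> t s U \<Phi> = (\<lambda>S.
      complex_of_real t * (\<Sum>(x, y)\<in>edges B. \<Sum>\<sigma>\<in>{Up, Dn}.
          cre (Lam M B) (acoef \<mu> \<zeta> B x) \<sigma> (ann (Lam M B) (acoef \<mu> \<zeta> B y) \<sigma> \<Phi>) S)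
    + complex_of_real s * (\<Sum>v\<in>Osites B \<union> Obsites B. \<Sum>\<sigma>\<in>{Up, Dn}.
          cre (Lam M B) (bcoef \<mu> v) \<sigma> (ann (Lam M B) (bcoef \<mu> v) \<sigma> \<Phi>) S)
    + complex_of_real U * (\<Sum>z\<in>Lam M B. numop (z, Up) (numop (z, Dn) \<Phi>) S))"

definition inner_fock :: "'a set \<Rightarrow> ('a \<times> 'a) set \<Rightarrow> 'a fock \<Rightarrow> 'a fock \<Rightarrow> complex" where
  "inner_fock M B \<Phi> \<Psi> = (\<Sum>S\<in>Pow (modes M B). cnj (\<Phi> S) * \<Psi> S)"

definition in_space :: "'a set \<Rightarrow> ('a \<times> 'a) set \<Rightarrow> nat \<Rightarrow> 'a fock \<Rightarrow> bool" where
  "in_space M B Ne \<Phi> \<longleftrightarrow> (\<forall>S. \<Phi> S \<noteq> 0 \<longrightarrow> S \<subseteq> modes M B \<and> card S = Ne)"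

definition finite_energy :: "'a::linorder set \<Rightarrow> ('a \<times> 'a) set \<Rightarrow> nat \<Rightarrow> real \<Rightarrow> real \<Rightarrow> 'a fock \<Rightarrow> bool" where
  "finite_energy M B \<zeta> \<mu> t \<Phi> \<longleftrightarrow>
     (\<exists>g :: real \<Rightarrow> complex.
        (\<forall>s>0. ((\<lambda>U. inner_fock M B \<Phi> (Ham M B \<zeta> \<mu> t s U \<Phi>)) \<longlongrightarrow> g s) at_top)
        \<and> (\<exists>L. (g \<longlongrightarrow> L) at_top))"

definition Splus :: "'a::linorder site set \<Rightarrow> 'a fock \<Rightarrow> 'a fock" where
  "Splus L \<Phi> = (\<lambda>S. \<Sum>z\<in>L. cr (z, Up) (an (z, Dn) \<Phi>) S)"

definition Sminus :: "'a::linorder site set \<Rightarrow> 'a fock \<Rightarrow> 'a fock" where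
  "Sminus L \<Phi> = (\<lambda>S. \<Sum>z\<in>L. cr (z, Dn) (an (z, Up) \<Phi>) S)"

definition S3 :: "'a::linorder site set \<Rightarrow> 'a fock \<Rightarrow> 'a fock" where
  "S3 L \<Phi> = (\<lambda>S. \<Sum>z\<in>L. (numop (z, Up) \<Phi> S - numop (z, Dn) \<Phi> S) / 2)"

definition S1 :: "'a::linorder site set \<Rightarrow> 'a fock \<Rightarrow> 'a fock" where
  "S1 L \<Phi> = (\<lambda>S. (Splus L \<Phi> S + Sminus L \<Phi> S) / 2)"

definition S2 :: "'a::linorder site set \<Rightarrow> 'a fock \<Rightarrow> 'a fock" where
  "S2 L \<Phi> = (\<lambda>S. (Splus L \<Phi> S - Sminus L \<Phi> S) / (2 * \<i>))"

definition Stot2 :: "'a::linorder site set \<Rightarrow> 'a fock \<Rightarrow> 'a fock" where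
  "Stot2 L \<Phi> = (\<lambda>S. S1 L (S1 L \<Phi>) S + S2 L (S2 L \<Phi>) S + S3 L (S3 L \<Phi>) S)"

definition aprod :: "'a::linorder set \<Rightarrow> ('a \<times> 'a) set \<Rightarrow> nat \<Rightarrow> real \<Rightarrow> 'a set \<Rightarrow> ('a \<Rightarrow> spin) \<Rightarrow> 'a fock" where
  "aprod M B \<zeta> \<mu> C \<sigma> = foldr (\<lambda>x \<Psi>. cre (Lam M B) (acoef \<mu> \<zeta> B x) (\<sigma> x) \<Psi>) (sorted_list_of_set C) vac"

definition components :: "('a \<times> 'a) set \<Rightarrow> 'a set \<Rightarrow> 'a set set" where
  "components B C = {((edges B \<inter> C \<times> C)\<^sup>*) `` {x} | x. x \<in> C}"

end

theory Submission
  imports Defs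
begin


lemma fsign_sq: "fsign T m * fsign T m = 1"
  unfolding fsign_def by (simp add: power_mult_distrib[symmetric])

lemma numop_eq: "numop m \<Psi> S = (if m \<in> S then \<Psi> S else 0)"
proof -
  have "m \<in> S \<Longrightarrow> insert m (S - {m}) = S" by auto
  then show ?thesis unfolding numop_def cr_def an_def
    using fsign_sq[of "S - {m}" m] by (auto simp: mult.assoc[symmetric])
qed

lemma lattice_fin:
  assumes "lattice M B \<zeta>"
  shows "finite M" "finite B" "finite (Lam M B)" "finite (modes M B)"
proof -
  show fM: "finite M" using assms unfolding lattice_def by auto
  have "B \<subseteq> M \<times> M" using assms unfolding lattice_def by auto
  then show fB: "finite B" using fM finite_subset by blast
  have "Osites B = (\<lambda>(x,y). Uo x y) ` B" unfolding Osites_def by auto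
  moreover have "Obsites B = (\<lambda>(x,y). Ub x y) ` B" unfolding Obsites_def by auto
  ultimately show fL: "finite (Lam M B)" unfolding Lam_def using fM fB by auto
  then show "finite (modes M B)" unfolding modes_def by auto
qed

lemma tendsto_affine_zero:
  fixes a d :: complex
  assumes "((\<lambda>U::real. a + of_real U * d) \<longlongrightarrow> L) at_top"
  shows "d = 0"
proof -
  have "LIM x at_top. (1::real) + x :> at_top"
    by (rule filterlim_tendsto_add_at_top[OF tendsto_const filterlim_ident])
  then have lim1: "LIM x at_top. x + (1::real) :> at_top" by (simp add: add.commute)
  have "((\<lambda>U::real. a + of_real (U + 1) * d) \<longlongrightarrow> L) at_top"
    using filterlim_compose[OF assms lim1] by (simp add: o_def)
  then have "((\<lambda>U::real. (a + of_real (U + 1) * d) - (a + of_real U * d)) \<longlongrightarrow> L - L) at_top"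
    using assms by (intro tendsto_diff)
  then have "((\<lambda>U::real. d) \<longlongrightarrow> 0) at_top" by (simp add: algebra_simps)
  then show "d = 0" by (simp add: tendsto_const_iff)
qed

lemma no_double:
  assumes lat: "lattice M B \<zeta>" and fe: "finite_energy M B \<zeta> \<mu> t \<Phi>"
    and S: "S \<subseteq> modes M B" and z: "z \<in> Lam M B" "(z, Up) \<in> S" "(z, Dn) \<in> S"
  shows "\<Phi> S = 0"
proof -
  obtain g where g: "\<forall>s>0. ((\<lambda>U. inner_fock M B \<Phi> (Ham M B \<zeta> \<mu> t s U \<Phi>)) \<longlongrightarrow> g s) at_top"
    using fe unfolding finite_energy_def by auto
  define P where "P = Pow (modes M B)"
  define X where "X = (\<Sum>S\<in>P. cnj (\<Phi> S) * (complex_of_real t * (\<Sum>(x, y)\<in>edges B. \<Sum>\<sigma>\<in>{Up, Dn}.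
          cre (Lam M B) (acoef \<mu> \<zeta> B x) \<sigma> (ann (Lam M B) (acoef \<mu> \<zeta> B y) \<sigma> \<Phi>) S)
    + complex_of_real 1 * (\<Sum>v\<in>Osites B \<union> Obsites B. \<Sum>\<sigma>\<in>{Up, Dn}.
          cre (Lam M B) (bcoef \<mu> v) \<sigma> (ann (Lam M B) (bcoef \<mu> v) \<sigma> \<Phi>) S)))"
  define dd where "dd = (\<Sum>S\<in>P. cnj (\<Phi> S) * (\<Sum>z\<in>Lam M B. numop (z, Up) (numop (z, Dn) \<Phi>) S))"
  have eq: "inner_fock M B \<Phi> (Ham M B \<zeta> \<mu> t 1 U \<Phi>) = X + of_real U * dd" for U
    unfolding inner_fock_def Ham_def X_def dd_def P_def
    by (simp add: sum.distrib sum_distrib_left distrib_left algebra_simps)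
  have "((\<lambda>U. X + of_real U * dd) \<longlongrightarrow> g 1) at_top" using g[rule_format, of 1] eq by simp
  then have dd0: "dd = 0" by (rule tendsto_affine_zero)
  define r where "r S = (cmod (\<Phi> S))^2 * real (card {z\<in>Lam M B. (z,Up)\<in>S \<and> (z,Dn)\<in>S})" for S
  have "dd = of_real (\<Sum>S\<in>P. r S)"
    unfolding dd_def r_def of_real_sum
  proof (rule sum.cong[OF refl])
    fix S
    have "(\<Sum>z\<in>Lam M B. numop (z, Up) (numop (z, Dn) \<Phi>) S)
        = (\<Sum>z\<in>Lam M B. if (z,Up)\<in>S \<and> (z,Dn)\<in>S then \<Phi> S else 0)"
      by (rule sum.cong) (auto simp: numop_eq)
    also have "\<dots> = of_nat (card {z\<in>Lam M B. (z,Up)\<in>S \<and> (z,Dn)\<in>S}) * \<Phi> S"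
      using lattice_fin(3)[OF lat] by (simp add: sum.If_cases Int_def conj_commute)
    finally show "cnj (\<Phi> S) * (\<Sum>z\<in>Lam M B. numop (z, Up) (numop (z, Dn) \<Phi>) S) =
         complex_of_real ((cmod (\<Phi> S))\<^sup>2 * real (card {z \<in> Lam M B. (z, Up) \<in> S \<and> (z, Dn) \<in> S}))"
      using complex_norm_square[of "\<Phi> S"] by (simp add: algebra_simps)
  qed
  then have "(\<Sum>S\<in>P. r S) = 0" using dd0 by (simp del: of_real_sum)
  moreover have "finite P" unfolding P_def using lattice_fin(4)[OF lat] by auto
  ultimately have "\<forall>S\<in>P. r S = 0" by (subst sum_nonneg_eq_0_iff[symmetric]) (auto simp: r_def)
  then have "r S = 0" using S unfolding P_def by auto
  moreover have "card {z\<in>Lam M B. (z,Up)\<in>S \<and> (z,Dn)\<in>S} \<noteq> 0"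
    using z lattice_fin(3)[OF lat] by (subst card_0_eq) auto
  ultimately show ?thesis unfolding r_def by simp
qed



lemma site_less_irrefl: "\<not> site_less z z"
  by (cases z) auto

lemma site_less_asym: "site_less a b \<Longrightarrow> \<not> site_less b a"
  by (cases a; cases b) auto

lemma site_less_total: "a \<noteq> b \<Longrightarrow> site_less a b \<or> site_less b a"
  by (cases a; cases b) auto

lemma mode_less_total: "m \<noteq> m' \<Longrightarrow> mode_less m m' \<or> mode_less m' m"
  unfolding mode_less_def
  by (cases m; cases m'; cases "snd m"; cases "snd m'") (auto dest: site_less_total)

lemma mode_less_asym: "mode_less m m' \<Longrightarrow> \<not> mode_less m' m"
  unfolding mode_less_def using site_less_asym site_less_irrefl
  by (cases m; cases m') fastforce

lemma fsign_insert:
  assumes "finite T" "a \<notin> T"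
  shows "fsign (insert a T) m = (if mode_less a m then - fsign T m else fsign T m)"
proof -
  have "{m' \<in> insert a T. mode_less m' m} = (if mode_less a m then insert a {m' \<in> T. mode_less m' m} else {m' \<in> T. mode_less m' m})"
    by auto
  then show ?thesis unfolding fsign_def using assms by auto
qed

lemma cr_anti:
  assumes "finite S"
  shows "cr m (cr m' \<Psi>) S = - cr m' (cr m \<Psi>) S"
proof (cases "m = m'")
  case True then show ?thesis unfolding cr_def by auto
next
  case ne: False
  show ?thesis
  proof (cases "m \<in> S \<and> m' \<in> S")
    case False then show ?thesis unfolding cr_def by auto
  next
    case True
    define T where "T = S - {m, m'}"
    have fT: "finite T" using assms T_def by auto
    have e1: "S - {m} = insert m' T" "S - {m'} = insert m T" using True ne T_def by auto
    have e2: "S - {m} - {m'} = T" "S - {m'} - {m} = T" using T_def by auto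
    have "m \<notin> T" "m' \<notin> T" using T_def by auto
    then show ?thesis unfolding cr_def using True ne e1 e2
      using fsign_insert[OF fT, of m' m] fsign_insert[OF fT, of m m'] mode_less_total[OF ne] mode_less_asym[of m m']
      by auto
  qed
qed

lemma cr_sum: "cr m (\<lambda>S. \<Sum>i\<in>I. h i S) S = (\<Sum>i\<in>I. cr m (h i) S)"
  unfolding cr_def by (auto simp: sum_distrib_left)

lemma cr_scale: "cr m (\<lambda>S. c * \<Psi> S) S = c * cr m \<Psi> S"
  unfolding cr_def by auto

lemma cre_scale: "cre L f \<sigma> (\<lambda>S. c * \<Psi> S) S = c * cre L f \<sigma> \<Psi> S"
  unfolding cre_def cr_def by (auto simp: sum_distrib_left intro!: sum.cong)

lemma cr_local:
  assumes "finite S" "\<And>S. finite S \<Longrightarrow> \<Psi> S = \<Psi>' S"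
  shows "cr m \<Psi> S = cr m \<Psi>' S"
  unfolding cr_def using assms by auto

lemma cre_local:
  assumes "finite S" "\<And>S. finite S \<Longrightarrow> \<Psi> S = \<Psi>' S"
  shows "cre L f \<sigma> \<Psi> S = cre L f \<sigma> \<Psi>' S"
  unfolding cre_def using cr_local[OF assms] by auto

lemma cre_anti:
  assumes "finite S"
  shows "cre L f \<sigma> (cre L g \<sigma>' \<Psi>) S = - cre L g \<sigma>' (cre L f \<sigma> \<Psi>) S"
proof -
  have "cre L f \<sigma> (cre L g \<sigma>' \<Psi>) S = (\<Sum>z\<in>L. \<Sum>z'\<in>L. of_real (f z) * of_real (g z') * cr (z,\<sigma>) (cr (z',\<sigma>') \<Psi>) S)"
    unfolding cre_def cr_sum by (simp add: cr_scale sum_distrib_left mult.assoc)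
  also have "\<dots> = (\<Sum>z\<in>L. \<Sum>z'\<in>L. - (of_real (g z') * of_real (f z) * cr (z',\<sigma>') (cr (z,\<sigma>) \<Psi>) S))"
  proof (intro sum.cong refl)
    fix z z'
    show "of_real (f z) * of_real (g z') * cr (z,\<sigma>) (cr (z',\<sigma>') \<Psi>) S = - (of_real (g z') * of_real (f z) * cr (z',\<sigma>') (cr (z,\<sigma>) \<Psi>) S)"
      unfolding cr_anti[OF assms, of "(z,\<sigma>)" "(z',\<sigma>')"] by simp
  qed
  also have "\<dots> = - (\<Sum>z'\<in>L. \<Sum>z\<in>L. of_real (g z') * of_real (f z) * cr (z',\<sigma>') (cr (z,\<sigma>) \<Psi>) S)"
    by (subst sum.swap) (simp add: sum_negf)
  also have "\<dots> = - cre L g \<sigma>' (cre L f \<sigma> \<Psi>) S"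
    unfolding cre_def cr_sum by (simp add: cr_scale sum_distrib_left mult.assoc)
  finally show ?thesis .
qed

lemma foldr_move:
  fixes F :: "'b \<Rightarrow> 'a::linorder fock \<Rightarrow> 'a fock"
  assumes anti: "\<And>a b \<Psi> S. finite S \<Longrightarrow> F a (F b \<Psi>) S = - F b (F a \<Psi>) S"
    and scale: "\<And>a c \<Psi> S. F a (\<lambda>S. c * \<Psi> S) S = c * F a \<Psi> S"
    and local: "\<And>a \<Psi> \<Psi>' S. finite S \<Longrightarrow> (\<And>S. finite S \<Longrightarrow> \<Psi> S = \<Psi>' S) \<Longrightarrow> F a \<Psi> S = F a \<Psi>' S"
  shows "finite S \<Longrightarrow> foldr F (xs @ a # ys) \<Psi> S = (-1) ^ length xs * F a (foldr F (xs @ ys) \<Psi>) S"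
proof (induction xs arbitrary: S)
  case Nil then show ?case by simp
next
  case (Cons b xs)
  have "foldr F ((b # xs) @ a # ys) \<Psi> S = F b (foldr F (xs @ a # ys) \<Psi>) S" by simp
  also have "\<dots> = F b (\<lambda>S. (-1) ^ length xs * F a (foldr F (xs @ ys) \<Psi>) S) S"
    using Cons by (intro local) auto
  also have "\<dots> = (-1) ^ length xs * F b (F a (foldr F (xs @ ys) \<Psi>)) S" by (rule scale)
  also have "\<dots> = (-1) ^ length (b # xs) * F a (foldr F ((b # xs) @ ys) \<Psi>) S"
    using anti[OF Cons.prems, of b a] by simp
  finally show ?case .
qed



definition SC :: "('a \<Rightarrow> spin) \<Rightarrow> 'a set \<Rightarrow> 'a mode set" where
  "SC \<tau> D = (\<lambda>x. (Ms x, \<tau> x)) ` D"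

lemma cre_nz:
  assumes "cre L f \<sigma> \<Psi> S \<noteq> 0"
  shows "\<exists>z\<in>L. f z \<noteq> 0 \<and> (z,\<sigma>) \<in> S \<and> \<Psi> (S - {(z,\<sigma>)}) \<noteq> 0"
proof (rule ccontr)
  assume "\<not> ?thesis"
  then have "\<forall>z\<in>L. complex_of_real (f z) * cr (z, \<sigma>) \<Psi> S = 0" unfolding cr_def by auto
  then have "cre L f \<sigma> \<Psi> S = 0" unfolding cre_def by (intro sum.neutral) auto
  then show False using assms by simp
qed

lemma supp:
  "distinct xs \<Longrightarrow> foldr (\<lambda>x \<Psi>. cre L (a x) (\<tau> x) \<Psi>) xs vac S \<noteq> 0 \<Longrightarrow>
   \<exists>g. S = g ` set xs \<and> (\<forall>x\<in>set xs. snd (g x) = \<tau> x \<and> a x (fst (g x)) \<noteq> 0 \<and> fst (g x) \<in> L)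
      \<and> card S = length xs \<and> finite S"
proof (induction xs arbitrary: S)
  case Nil then show ?case by (auto simp: vac_def split: if_splits)
next
  case (Cons x xs)
  from cre_nz[OF Cons.prems(2)[simplified]] obtain z where
    z: "z \<in> L" "a x z \<noteq> 0" "(z, \<tau> x) \<in> S" "foldr (\<lambda>x \<Psi>. cre L (a x) (\<tau> x) \<Psi>) xs vac (S - {(z, \<tau> x)}) \<noteq> 0"
    by auto
  from Cons.IH[OF _ z(4)] Cons.prems(1) obtain g where
    g: "S - {(z, \<tau> x)} = g ` set xs" "\<forall>x\<in>set xs. snd (g x) = \<tau> x \<and> a x (fst (g x)) \<noteq> 0 \<and> fst (g x) \<in> L"
       "card (S - {(z, \<tau> x)}) = length xs" "finite (S - {(z, \<tau> x)})" by auto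
  have xn: "x \<notin> set xs" using Cons.prems(1) by auto
  define g' where "g' = g(x := (z, \<tau> x))"
  have "S = insert (z, \<tau> x) (S - {(z, \<tau> x)})" using z by auto
  also have "\<dots> = g' ` set (x # xs)" unfolding g(1) g'_def using xn by auto
  finally have S: "S = g' ` set (x # xs)" .
  have fS: "finite S" using S by auto
  have "card S = Suc (card (S - {(z, \<tau> x)}))" using z(3) fS by (metis card_Suc_Diff1)
  moreover have "\<forall>y\<in>set (x # xs). snd (g' y) = \<tau> y \<and> a y (fst (g' y)) \<noteq> 0 \<and> fst (g' y) \<in> L"
    using g(2) z xn unfolding g'_def by auto
  ultimately show ?case using S fS g(3) by (intro exI[of _ g']) auto
qed

lemma supp_aprod:
  assumes "finite D" "aprod M B \<zeta> \<mu> D \<tau> S \<noteq> 0"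
  shows "\<exists>g. S = g ` D \<and> (\<forall>x\<in>D. snd (g x) = \<tau> x \<and> acoef \<mu> \<zeta> B x (fst (g x)) \<noteq> 0 \<and> fst (g x) \<in> Lam M B)
      \<and> card S = card D \<and> finite S"
  using supp[of "sorted_list_of_set D" "Lam M B" "acoef \<mu> \<zeta> B" \<tau> S] assms
  unfolding aprod_def by auto

lemma acoef_Ms: "acoef \<mu> \<zeta> B x (Ms w) = (if w = x then 1 / sqrt (1 + 2 * real \<zeta> * \<mu>\<^sup>2) else 0)"
  unfolding acoef_def by auto

lemma acoef_Ms_nz: "acoef \<mu> \<zeta> B x (Ms w) \<noteq> 0 \<Longrightarrow> w = x"
  unfolding acoef_Ms by (auto split: if_splits)

lemma diag:
  assumes "sorted xs" "distinct xs" "\<forall>x\<in>set xs. Ms x \<in> L" and fL: "finite L"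
    and a: "\<And>x w. a x (Ms w) = (if w = x then N else 0)"
  shows "foldr (\<lambda>x \<Psi>. cre L (a x) (\<tau> x) \<Psi>) xs vac (SC \<tau> (set xs)) = of_real N ^ length xs"
  using assms(1-3)
proof (induction xs)
  case Nil then show ?case by (simp add: SC_def vac_def)
next
  case (Cons x xs)
  let ?\<Psi> = "foldr (\<lambda>x \<Psi>. cre L (a x) (\<tau> x) \<Psi>) xs vac"
  let ?S = "SC \<tau> (set (x # xs))"
  have lt: "\<forall>y\<in>set xs. x < y" using Cons.prems(1,2) by (auto simp: less_le)
  have xn: "x \<notin> set xs" using Cons.prems(2) by auto
  have Sd: "?S - {(Ms x, \<tau> x)} = SC \<tau> (set xs)" unfolding SC_def using xn by auto
  have fs: "fsign (SC \<tau> (set xs)) (Ms x, \<tau> x) = 1"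
  proof -
    have e: "{m' \<in> SC \<tau> (set xs). mode_less m' (Ms x, \<tau> x)} = {}"
      unfolding SC_def mode_less_def using lt by auto
    show ?thesis unfolding fsign_def e by simp
  qed
  have "cre L (a x) (\<tau> x) ?\<Psi> ?S = (\<Sum>z\<in>L. complex_of_real (a x z) * cr (z, \<tau> x) ?\<Psi> ?S)"
    unfolding cre_def ..
  also have "\<dots> = complex_of_real (a x (Ms x)) * cr (Ms x, \<tau> x) ?\<Psi> ?S"
  proof -
    have "Ms x \<in> L" using Cons.prems(3) by auto
    moreover have "(\<Sum>z\<in>L - {Ms x}. complex_of_real (a x z) * cr (z, \<tau> x) ?\<Psi> ?S) = 0"
      by (rule sum.neutral) (auto simp: cr_def SC_def a)
    ultimately show ?thesis using fL by (simp add: sum.remove)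
  qed
  also have "\<dots> = of_real N * ?\<Psi> (SC \<tau> (set xs))"
    unfolding cr_def using Sd fs a by (simp add: SC_def)
  also have "\<dots> = of_real N ^ length (x # xs)"
    using Cons by simp
  finally show ?case by simp
qed



abbreviation NN :: "real \<Rightarrow> nat \<Rightarrow> real" where
  "NN \<mu> \<zeta> \<equiv> 1 / sqrt (1 + 2 * real \<zeta> * \<mu>\<^sup>2)"

lemma NN_pos: "NN \<mu> \<zeta> > 0"
  by (simp add: add_pos_nonneg)

lemma Ms_Lam: "x \<in> M \<Longrightarrow> Ms x \<in> Lam M B"
  unfolding Lam_def by auto

lemma SC_cong: "(\<And>x. x \<in> D \<Longrightarrow> \<tau> x = \<tau>' x) \<Longrightarrow> SC \<tau> D = SC \<tau>' D"
  unfolding SC_def by auto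

lemma aprod_diag:
  assumes lat: "lattice M B \<zeta>" and D: "D \<subseteq> M"
  shows "aprod M B \<zeta> \<mu> D \<tau> (SC \<tau> D) = of_real (NN \<mu> \<zeta>) ^ card D"
proof -
  have fD: "finite D" using lattice_fin(1)[OF lat] D finite_subset by auto
  show ?thesis unfolding aprod_def
    using diag[of "sorted_list_of_set D" "Lam M B" "acoef \<mu> \<zeta> B" "NN \<mu> \<zeta>" \<tau>] fD D
      lattice_fin(3)[OF lat] Ms_Lam[of _ M B]
    by (auto simp: acoef_Ms)
qed

lemma aprod_cong:
  assumes "\<And>x. x \<in> D \<Longrightarrow> \<tau> x = \<tau>' x" "finite D"
  shows "aprod M B \<zeta> \<mu> D \<tau> = aprod M B \<zeta> \<mu> D \<tau>'"
proof -
  have "\<forall>x\<in>set (sorted_list_of_set D). \<tau> x = \<tau>' x" using assms by auto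
  then have "foldr (\<lambda>x. cre (Lam M B) (acoef \<mu> \<zeta> B x) (\<tau> x)) xs vac =
             foldr (\<lambda>x. cre (Lam M B) (acoef \<mu> \<zeta> B x) (\<tau>' x)) xs vac"
    if "set xs \<subseteq> D" for xs using that assms(1) by (induction xs) auto
  then show ?thesis unfolding aprod_def using assms by auto
qed

lemma extract_coef:
  fixes \<psi> :: "'a::linorder set \<Rightarrow> ('a \<Rightarrow> spin) \<Rightarrow> complex"
  assumes lat: "lattice M B \<zeta>"
    and expand: "\<Phi> = (\<lambda>S. \<Sum>D\<in>{D. D \<subseteq> M \<and> card D = Ne}.
                      \<Sum>\<tau>\<in>Pi\<^sub>E D (\<lambda>_. {Up, Dn}). \<psi> D \<tau> * aprod M B \<zeta> \<mu> D \<tau> S)"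
    and C: "C \<subseteq> M" "card C = Ne"
  shows "\<Phi> (SC \<tau> C) = \<psi> C (restrict \<tau> C) * of_real (NN \<mu> \<zeta>) ^ Ne"
proof -
  have fM: "finite M" using lattice_fin[OF lat] by auto
  have fC: "finite C" using fM C finite_subset by auto
  let ?Ds = "{D. D \<subseteq> M \<and> card D = Ne}"
  let ?t0 = "restrict \<tau> C"
  have fDs: "finite ?Ds" using fM by auto
  have key: "D = C \<and> \<tau>' = ?t0"
    if D: "D \<in> ?Ds" and t: "\<tau>' \<in> Pi\<^sub>E D (\<lambda>_. {Up, Dn})" and nz: "aprod M B \<zeta> \<mu> D \<tau>' (SC \<tau> C) \<noteq> 0" for D \<tau>'
  proof -
    have fD: "finite D" using D fM finite_subset by auto
    obtain g where g: "SC \<tau> C = g ` D" "\<forall>x\<in>D. snd (g x) = \<tau>' x \<and> acoef \<mu> \<zeta> B x (fst (g x)) \<noteq> 0"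
      using supp_aprod[OF fD nz] by auto
    have sub: "x \<in> D \<and> \<tau>' x = \<tau> x" if "x \<in> C" for x
    proof -
      have "(Ms x, \<tau> x) \<in> g ` D" using g(1) that unfolding SC_def by auto
      then obtain d where d: "d \<in> D" "g d = (Ms x, \<tau> x)" by auto
      then have "acoef \<mu> \<zeta> B d (Ms x) \<noteq> 0" using g(2) by force
      then have "x = d" by (rule acoef_Ms_nz)
      then show ?thesis using d g(2) by force
    qed
    then have "C \<subseteq> D" by auto
    then have DC: "D = C" using card_subset_eq[OF fD] D C by auto
    have "\<tau>' = ?t0"
    proof
      fix x show "\<tau>' x = ?t0 x"
        using t sub DC by (cases "x \<in> C") (auto simp: PiE_def extensional_def)
    qed
    then show ?thesis using DC by auto
  qed
  have t0: "?t0 \<in> Pi\<^sub>E C (\<lambda>_. {Up, Dn})" by (auto intro: spin.exhaust)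
  have CD: "C \<in> ?Ds" using C by auto
  have "\<Phi> (SC \<tau> C) = (\<Sum>D\<in>?Ds. \<Sum>\<tau>'\<in>Pi\<^sub>E D (\<lambda>_. {Up, Dn}). \<psi> D \<tau>' * aprod M B \<zeta> \<mu> D \<tau>' (SC \<tau> C))"
    by (subst expand) simp
  also have "\<dots> = (\<Sum>\<tau>'\<in>Pi\<^sub>E C (\<lambda>_. {Up, Dn}). \<psi> C \<tau>' * aprod M B \<zeta> \<mu> C \<tau>' (SC \<tau> C))"
  proof -
    have "(\<Sum>D\<in>?Ds - {C}. \<Sum>\<tau>'\<in>Pi\<^sub>E D (\<lambda>_. {Up, Dn}). \<psi> D \<tau>' * aprod M B \<zeta> \<mu> D \<tau>' (SC \<tau> C)) = 0"
      using key by (intro sum.neutral ballI) force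
    then show ?thesis by (subst sum.remove[OF fDs CD]) simp
  qed
  also have "\<dots> = \<psi> C ?t0 * aprod M B \<zeta> \<mu> C ?t0 (SC \<tau> C)"
  proof -
    have "(\<Sum>\<tau>'\<in>Pi\<^sub>E C (\<lambda>_. {Up, Dn}) - {?t0}. \<psi> C \<tau>' * aprod M B \<zeta> \<mu> C \<tau>' (SC \<tau> C)) = 0"
      using key CD by (intro sum.neutral ballI) force
    moreover have "finite (Pi\<^sub>E C (\<lambda>_. {Up, Dn}))" using fC by (simp add: finite_PiE)
    ultimately show ?thesis by (subst sum.remove[OF _ t0]) simp_all
  qed
  also have "aprod M B \<zeta> \<mu> C ?t0 (SC \<tau> C) = of_real (NN \<mu> \<zeta>) ^ Ne"
  proof -
    have "SC \<tau> C = SC ?t0 C" by (rule SC_cong) auto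
    then show ?thesis using aprod_diag[OF lat C(1), of \<mu> ?t0] C by simp
  qed
  finally show ?thesis .
qed



lemma double_sum_single:
  assumes "finite L" "u \<in> L" "\<And>z z'. z \<in> L \<Longrightarrow> z' \<in> L \<Longrightarrow> (z, z') \<noteq> (u, u) \<Longrightarrow> h z z' = (0::complex)"
  shows "(\<Sum>z\<in>L. \<Sum>z'\<in>L. h z z') = h u u"
proof -
  have "(\<Sum>z\<in>L. \<Sum>z'\<in>L. h z z') = (\<Sum>z\<in>L. if z = u then h u u else 0)"
  proof (rule sum.cong[OF refl])
    fix z assume z: "z \<in> L"
    show "(\<Sum>z'\<in>L. h z z') = (if z = u then h u u else 0)"
    proof (cases "z = u")
      case True
      have "(\<Sum>z'\<in>L - {u}. h z z') = 0" using assms True by (intro sum.neutral) auto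
      then show ?thesis using True assms by (simp add: sum.remove)
    next
      case False then show ?thesis using assms z by (auto intro: sum.neutral)
    qed
  qed
  also have "\<dots> = h u u" using assms by simp
  finally show ?thesis .
qed

lemma cre_two: "cre L f a (cre L g b \<Psi>) S = (\<Sum>z\<in>L. \<Sum>z'\<in>L. of_real (f z) * of_real (g z') * cr (z,a) (cr (z',b) \<Psi>) S)"
  unfolding cre_def cr_sum by (simp add: cr_scale sum_distrib_left mult.assoc)

lemma foldr_cre_cong:
  "(\<forall>w\<in>set xs. \<tau> w = \<tau>' w) \<Longrightarrow> foldr (\<lambda>w. cre L (a w) (\<tau> w)) xs v = foldr (\<lambda>w. cre L (a w) (\<tau>' w)) xs v"
  by (induction xs) auto

lemma foldr_move_cre:
  assumes "finite S"
  shows "foldr (\<lambda>w. cre L (a w) (\<tau> w)) (xs @ b # ys) \<Psi> S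
       = (-1) ^ length xs * cre L (a b) (\<tau> b) (foldr (\<lambda>w. cre L (a w) (\<tau> w)) (xs @ ys) \<Psi>) S"
  by (rule foldr_move[OF cre_anti cre_scale cre_local assms])

lemma acoef_Uo_nz:
  "acoef \<mu> \<zeta> B d (Uo x y) \<noteq> 0 \<Longrightarrow> d = x \<or> d = y"
  unfolding acoef_def by (auto split: if_splits)

lemma acoef_Uo:
  assumes "(x, y) \<in> B" "x \<noteq> y"
  shows "acoef \<mu> \<zeta> B x (Uo x y) = NN \<mu> \<zeta> * \<mu>" "acoef \<mu> \<zeta> B y (Uo x y) = NN \<mu> \<zeta> * \<mu>"
  unfolding acoef_def using assms by auto

lemma swap_sym:
  fixes \<psi> :: "'a::linorder set \<Rightarrow> ('a \<Rightarrow> spin) \<Rightarrow> complex"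
  assumes lat: "lattice M B \<zeta>" and mu: "\<mu> > 0"
    and fe: "finite_energy M B \<zeta> \<mu> t \<Phi>"
    and expand: "\<Phi> = (\<lambda>S. \<Sum>D\<in>{D. D \<subseteq> M \<and> card D = Ne}.
                      \<Sum>\<tau>\<in>Pi\<^sub>E D (\<lambda>_. {Up, Dn}). \<psi> D \<tau> * aprod M B \<zeta> \<mu> D \<tau> S)"
    and C: "C \<subseteq> M" "card C = Ne"
    and xy: "(x, y) \<in> B" "x \<in> C" "y \<in> C"
  shows "\<psi> C (restrict (\<tau>(x := \<tau> y, y := \<tau> x)) C) = \<psi> C (restrict \<tau> C)"
proof (cases "\<tau> x = \<tau> y")
  case True
  then have "\<tau>(x := \<tau> y, y := \<tau> x) = \<tau>" by auto
  then show ?thesis by simp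
next
  case tne: False
  have xny: "x \<noteq> y" using tne by auto
  have fM: "finite M" and fL: "finite (Lam M B)" using lattice_fin[OF lat] by auto
  have fC: "finite C" using fM C finite_subset by auto
  define u where "u = Uo x y"
  define C2 where "C2 = C - {x, y}"
  define S' where "S' = insert (u, Up) (insert (u, Dn) (SC \<tau> C2))"
  define t1 where "t1 = restrict \<tau> C"
  define t2 where "t2 = restrict (\<tau>(x := \<tau> y, y := \<tau> x)) C"
  let ?Ds = "{D. D \<subseteq> M \<and> card D = Ne}"
  have uL: "u \<in> Lam M B" unfolding u_def Lam_def Osites_def using xy by auto
  have fS': "finite S'" unfolding S'_def SC_def C2_def using fC by auto
  have uS: "(u, s) \<notin> SC \<tau> C2" for s unfolding SC_def u_def by auto
  have Phi0: "\<Phi> S' = 0"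
  proof (rule no_double[OF lat fe _ uL])
    show "S' \<subseteq> modes M B" unfolding S'_def modes_def SC_def C2_def
      using uL C Ms_Lam[of _ M B] by (auto intro: spin.exhaust)
  qed (auto simp: S'_def)
  have key: "D = C \<and> (\<tau>' = t1 \<or> \<tau>' = t2)"
    if D: "D \<in> ?Ds" and t: "\<tau>' \<in> Pi\<^sub>E D (\<lambda>_. {Up, Dn})" and nz: "aprod M B \<zeta> \<mu> D \<tau>' S' \<noteq> 0" for D \<tau>'
  proof -
    have fD: "finite D" using D fM finite_subset by auto
    obtain g where g: "S' = g ` D" "\<forall>x\<in>D. snd (g x) = \<tau>' x \<and> acoef \<mu> \<zeta> B x (fst (g x)) \<noteq> 0"
      using supp_aprod[OF fD nz] by auto
    have sub: "z \<in> D \<and> \<tau>' z = \<tau> z" if "z \<in> C2" for z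
    proof -
      have "(Ms z, \<tau> z) \<in> g ` D" using g(1) that unfolding S'_def SC_def by auto
      then obtain d where d: "d \<in> D" "g d = (Ms z, \<tau> z)" by auto
      then have "acoef \<mu> \<zeta> B d (Ms z) \<noteq> 0" using g(2) by force
      then have "z = d" by (rule acoef_Ms_nz)
      then show ?thesis using d g(2) by force
    qed
    obtain d1 where d1: "d1 \<in> D" "g d1 = (u, Up)" using g(1) unfolding S'_def by (metis imageE insertI1)
    obtain d2 where d2: "d2 \<in> D" "g d2 = (u, Dn)" using g(1) unfolding S'_def by (metis imageE insertI1 insertI2)
    have "d1 = x \<or> d1 = y" using g(2) d1 acoef_Uo_nz unfolding u_def by force
    moreover have "d2 = x \<or> d2 = y" using g(2) d2 acoef_Uo_nz unfolding u_def by force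
    moreover have "d1 \<noteq> d2" using d1 d2 by auto
    ultimately have xyD: "(d1 = x \<and> d2 = y) \<or> (d1 = y \<and> d2 = x)" by auto
    have tx: "\<tau>' d1 = Up" "\<tau>' d2 = Dn" using g(2) d1 d2 by force+
    have "C \<subseteq> D" using sub xyD d1 d2 unfolding C2_def by auto
    then have DC: "D = C" using card_subset_eq[OF fD] D C by auto
    have "\<tau>' = t1 \<or> \<tau>' = t2"
    proof (cases "\<tau> x")
      case Up
      then have "\<tau> y = Dn" using tne by (cases "\<tau> y") auto
      then have "\<tau>' x = \<tau> x \<and> \<tau>' y = \<tau> y \<or> \<tau>' x = \<tau> y \<and> \<tau>' y = \<tau> x"
        using xyD tx Up by auto
      then show ?thesis
      proof
        assume a: "\<tau>' x = \<tau> x \<and> \<tau>' y = \<tau> y"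
        have "\<tau>' = t1"
        proof
          fix z show "\<tau>' z = t1 z" unfolding t1_def using a sub t DC
            by (cases "z \<in> C") (auto simp: C2_def PiE_def extensional_def)
        qed
        then show ?thesis ..
      next
        assume a: "\<tau>' x = \<tau> y \<and> \<tau>' y = \<tau> x"
        have "\<tau>' = t2"
        proof
          fix z show "\<tau>' z = t2 z" unfolding t2_def using a sub t DC xny
            by (cases "z \<in> C") (auto simp: C2_def PiE_def extensional_def)
        qed
        then show ?thesis ..
      qed
    next
      case Dn
      then have "\<tau> y = Up" using tne by (cases "\<tau> y") auto
      then have "\<tau>' x = \<tau> x \<and> \<tau>' y = \<tau> y \<or> \<tau>' x = \<tau> y \<and> \<tau>' y = \<tau> x"
        using xyD tx Dn by auto
      then show ?thesis
      proof
        assume a: "\<tau>' x = \<tau> x \<and> \<tau>' y = \<tau> y"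
        have "\<tau>' = t1"
        proof
          fix z show "\<tau>' z = t1 z" unfolding t1_def using a sub t DC
            by (cases "z \<in> C") (auto simp: C2_def PiE_def extensional_def)
        qed
        then show ?thesis ..
      next
        assume a: "\<tau>' x = \<tau> y \<and> \<tau>' y = \<tau> x"
        have "\<tau>' = t2"
        proof
          fix z show "\<tau>' z = t2 z" unfolding t2_def using a sub t DC xny
            by (cases "z \<in> C") (auto simp: C2_def PiE_def extensional_def)
        qed
        then show ?thesis ..
      qed
    qed
    then show ?thesis using DC by auto
  qed
  have t1P: "t1 \<in> Pi\<^sub>E C (\<lambda>_. {Up, Dn})" unfolding t1_def by (auto intro: spin.exhaust)
  have t2P: "t2 \<in> Pi\<^sub>E C (\<lambda>_. {Up, Dn})" unfolding t2_def by (auto intro: spin.exhaust)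
  have t12: "t1 \<noteq> t2" unfolding t1_def t2_def using xy tne xny
    by (metis fun_upd_same restrict_apply')
  have CD: "C \<in> ?Ds" using C by auto
  have fDs: "finite ?Ds" using fM by auto
  have fP: "finite (Pi\<^sub>E C (\<lambda>_. {Up, Dn}))" using fC by (simp add: finite_PiE)
  have "\<Phi> S' = (\<Sum>D\<in>?Ds. \<Sum>\<tau>'\<in>Pi\<^sub>E D (\<lambda>_. {Up, Dn}). \<psi> D \<tau>' * aprod M B \<zeta> \<mu> D \<tau>' S')"
    by (subst expand) simp
  also have "\<dots> = (\<Sum>\<tau>'\<in>Pi\<^sub>E C (\<lambda>_. {Up, Dn}). \<psi> C \<tau>' * aprod M B \<zeta> \<mu> C \<tau>' S')"
  proof -
    have "(\<Sum>D\<in>?Ds - {C}. \<Sum>\<tau>'\<in>Pi\<^sub>E D (\<lambda>_. {Up, Dn}). \<psi> D \<tau>' * aprod M B \<zeta> \<mu> D \<tau>' S') = 0"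
    proof (intro sum.neutral ballI)
      fix D \<tau>' assume "D \<in> ?Ds - {C}" "\<tau>' \<in> Pi\<^sub>E D (\<lambda>_. {Up, Dn})"
      then show "\<psi> D \<tau>' * aprod M B \<zeta> \<mu> D \<tau>' S' = 0" using key[of D \<tau>'] by auto
    qed
    then show ?thesis by (subst sum.remove[OF fDs CD]) simp
  qed
  also have "\<dots> = \<psi> C t1 * aprod M B \<zeta> \<mu> C t1 S' + \<psi> C t2 * aprod M B \<zeta> \<mu> C t2 S'"
  proof -
    have "(\<Sum>\<tau>'\<in>Pi\<^sub>E C (\<lambda>_. {Up, Dn}) - {t1} - {t2}. \<psi> C \<tau>' * aprod M B \<zeta> \<mu> C \<tau>' S') = 0"
    proof (intro sum.neutral ballI)
      fix \<tau>' assume "\<tau>' \<in> Pi\<^sub>E C (\<lambda>_. {Up, Dn}) - {t1} - {t2}"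
      then show "\<psi> C \<tau>' * aprod M B \<zeta> \<mu> C \<tau>' S' = 0" using key[of C \<tau>'] CD by auto
    qed
    then show ?thesis using fP t1P t2P t12
      by (subst sum.remove[OF fP t1P], subst sum.remove[of _ t2]) auto
  qed
  finally have eq0: "\<psi> C t1 * aprod M B \<zeta> \<mu> C t1 S' + \<psi> C t2 * aprod M B \<zeta> \<mu> C t2 S' = 0"
    using Phi0 by simp
  define Ls where "Ls = sorted_list_of_set C"
  have dLs: "distinct Ls" and sLs: "set Ls = C" unfolding Ls_def using fC by auto
  obtain xs ys where Lxy: "Ls = xs @ x # ys" using split_list[of x Ls] sLs xy by auto
  have "y \<in> set (xs @ ys)" using Lxy sLs xy xny by auto
  then obtain xs' ys' where Lxy2: "xs @ ys = xs' @ y # ys'" using split_list by metis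
  define Ls2 where "Ls2 = xs' @ ys'"
  have dxy: "distinct (xs @ ys)" "x \<notin> set (xs @ ys)" using dLs Lxy by auto
  have sxy: "set (xs @ ys) = C - {x}" using sLs Lxy dxy(2) by auto
  have dxy2: "distinct (xs' @ ys')" "y \<notin> set (xs' @ ys')" using dxy(1) Lxy2 by auto
  have "set (xs' @ ys') = set (xs' @ y # ys') - {y}" using dxy2(2) by auto
  also have "\<dots> = C - {x} - {y}" using sxy Lxy2 by simp
  finally have sLs2: "set Ls2 = C2" unfolding Ls2_def C2_def by auto
  have dLs2: "distinct Ls2" unfolding Ls2_def using dxy2 by auto
  have sortLs2: "sorted Ls2"
  proof -
    have "sorted Ls" unfolding Ls_def by simp
    then have "sorted (xs @ ys)" using Lxy by (simp add: sorted_append)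
    then show ?thesis using Lxy2 unfolding Ls2_def by (simp add: sorted_append)
  qed
  let ?F = "\<lambda>t w. cre (Lam M B) (acoef \<mu> \<zeta> B w) (t w)"
  define \<Psi>0 where "\<Psi>0 = foldr (?F \<tau>) Ls2 vac"
  define G where "G a b = cre (Lam M B) (acoef \<mu> \<zeta> B x) a (cre (Lam M B) (acoef \<mu> \<zeta> B y) b \<Psi>0) S'" for a b
  have reord: "aprod M B \<zeta> \<mu> C t S' = (-1) ^ (length xs + length xs') * G (t x) (t y)"
    if tC: "\<forall>w\<in>C2. t w = \<tau> w" for t
  proof -
    have "aprod M B \<zeta> \<mu> C t S' = foldr (?F t) (xs @ x # ys) vac S'"
      unfolding aprod_def Ls_def[symmetric] Lxy ..
    also have "\<dots> = (-1) ^ length xs * ?F t x (foldr (?F t) (xs @ ys) vac) S'"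
      by (rule foldr_move_cre[OF fS'])
    also have "?F t x (foldr (?F t) (xs @ ys) vac) S' =
        ?F t x (\<lambda>S. (-1) ^ length xs' * ?F t y (foldr (?F t) Ls2 vac) S) S'"
      by (rule cre_local[OF fS']) (simp only: Lxy2 Ls2_def foldr_move_cre)
    also have "\<dots> = (-1) ^ length xs' * ?F t x (?F t y (foldr (?F t) Ls2 vac)) S'"
      by (rule cre_scale)
    also have "foldr (?F t) Ls2 vac = \<Psi>0"
      unfolding \<Psi>0_def using tC sLs2 by (intro foldr_cre_cong) auto
    finally show ?thesis unfolding G_def by (simp add: power_add)
  qed
  have a1: "aprod M B \<zeta> \<mu> C t1 S' = (-1) ^ (length xs + length xs') * G (\<tau> x) (\<tau> y)"
    using reord[of t1] xy unfolding t1_def C2_def by auto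
  have a2: "aprod M B \<zeta> \<mu> C t2 S' = (-1) ^ (length xs + length xs') * G (\<tau> y) (\<tau> x)"
    using reord[of t2] xy xny unfolding t2_def C2_def by auto
  have Gval: "G a b = of_real (NN \<mu> \<zeta> * \<mu>) * of_real (NN \<mu> \<zeta> * \<mu>) * cr (u, a) (cr (u, b) \<Psi>0) S'"
    if ab: "a \<noteq> b" for a b
  proof -
    have "G a b = (\<Sum>z\<in>Lam M B. \<Sum>z'\<in>Lam M B. of_real (acoef \<mu> \<zeta> B x z) * of_real (acoef \<mu> \<zeta> B y z') * cr (z,a) (cr (z',b) \<Psi>0) S')"
      unfolding G_def by (rule cre_two)
    also have "\<dots> = of_real (acoef \<mu> \<zeta> B x u) * of_real (acoef \<mu> \<zeta> B y u) * cr (u,a) (cr (u,b) \<Psi>0) S'"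
    proof (rule double_sum_single[OF fL uL])
      fix z z' assume zz: "(z, z') \<noteq> (u, u)"
      show "of_real (acoef \<mu> \<zeta> B x z) * of_real (acoef \<mu> \<zeta> B y z') * cr (z,a) (cr (z',b) \<Psi>0) S' = 0"
      proof (rule ccontr)
        assume "\<not> ?thesis"
        then have nz: "cr (z,a) (cr (z',b) \<Psi>0) S' \<noteq> 0" by auto
        then have m1: "(z,a) \<in> S'" and m2: "(z',b) \<in> S' - {(z,a)}"
          and p: "\<Psi>0 (S' - {(z,a)} - {(z',b)}) \<noteq> 0"
          unfolding cr_def by (auto split: if_splits)
        obtain g where g: "S' - {(z,a)} - {(z',b)} = g ` set Ls2"
          "\<forall>w\<in>set Ls2. snd (g w) = \<tau> w \<and> acoef \<mu> \<zeta> B w (fst (g w)) \<noteq> 0"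
          using supp[OF dLs2 p[unfolded \<Psi>0_def]] by auto
        have nu: "(u, s) \<notin> S' - {(z,a)} - {(z',b)}" for s
        proof
          assume "(u, s) \<in> S' - {(z,a)} - {(z',b)}"
          then obtain w where w: "w \<in> set Ls2" "g w = (u, s)" using g(1) by auto
          then have "w = x \<or> w = y" using g(2) acoef_Uo_nz[of \<mu> \<zeta> B w x y] unfolding u_def by force
          then show False using w(1) sLs2 unfolding C2_def by auto
        qed
        have "(u, Up) \<in> S'" "(u, Dn) \<in> S'" unfolding S'_def by auto
        then have "(u, Up) \<in> {(z,a), (z',b)}" "(u, Dn) \<in> {(z,a), (z',b)}" using nu by blast+
        then have "z = u" "z' = u" using ab by auto
        then show False using zz by auto
      qed
    qed
    finally show ?thesis using acoef_Uo[OF xy(1) xny] unfolding u_def by simp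
  qed
  have crval: "cr (u, a) (cr (u, b) \<Psi>0) S' \<noteq> 0" if ab: "a \<noteq> b" for a b
  proof -
    have S'ab: "S' - {(u,a)} - {(u,b)} = SC \<tau> C2" "(u,b) \<in> S' - {(u,a)}" "(u,a) \<in> S'"
      unfolding S'_def using ab uS by (cases a; cases b; auto)+
    have "\<Psi>0 (SC \<tau> C2) = of_real (NN \<mu> \<zeta>) ^ length Ls2"
      unfolding \<Psi>0_def sLs2[symmetric]
      by (rule diag[OF sortLs2 dLs2 _ fL]) (use sLs2 C Ms_Lam[of _ M B] in \<open>auto simp: C2_def acoef_Ms\<close>)
    then have "\<Psi>0 (SC \<tau> C2) \<noteq> 0" using NN_pos[of \<zeta> \<mu>] by simp
    moreover have fs: "fsign T m \<noteq> 0" for T m unfolding fsign_def by simp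
    ultimately show ?thesis unfolding cr_def using S'ab fs[of "S' - {(u, a)}" "(u, a)"] fs[of "SC \<tau> C2" "(u, b)"] by simp
  qed
  have "G (\<tau> y) (\<tau> x) = - G (\<tau> x) (\<tau> y)"
    using Gval[of "\<tau> y" "\<tau> x"] Gval[of "\<tau> x" "\<tau> y"] tne cr_anti[OF fS', of "(u, \<tau> y)" "(u, \<tau> x)" \<Psi>0]
    by simp
  moreover have "G (\<tau> x) (\<tau> y) \<noteq> 0"
    using Gval[of "\<tau> x" "\<tau> y"] crval[of "\<tau> x" "\<tau> y"] tne NN_pos[of \<zeta> \<mu>] mu by simp
  ultimately have "\<psi> C t1 = \<psi> C t2" using eq0 a1 a2
    by (simp add: algebra_simps)
  then show ?thesis unfolding t1_def t2_def by simp
qed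



definition sp :: "'a set \<Rightarrow> (('a \<Rightarrow> spin) \<Rightarrow> complex) \<Rightarrow> ('a \<Rightarrow> spin) \<Rightarrow> complex" where
  "sp C h \<tau> = (\<Sum>x\<in>{x\<in>C. \<tau> x = Up}. h (\<tau>(x := Dn)))"

definition sm :: "'a set \<Rightarrow> (('a \<Rightarrow> spin) \<Rightarrow> complex) \<Rightarrow> ('a \<Rightarrow> spin) \<Rightarrow> complex" where
  "sm C h \<tau> = (\<Sum>x\<in>{x\<in>C. \<tau> x = Dn}. h (\<tau>(x := Up)))"

definition wt :: "'a set \<Rightarrow> ('a \<Rightarrow> spin) \<Rightarrow> complex" where
  "wt C \<tau> = (of_nat (card {x\<in>C. \<tau> x = Up}) - of_nat (card {x\<in>C. \<tau> x = Dn})) / 2"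

lemma SC_mem: "(Ms w, s) \<in> SC \<tau> C \<longleftrightarrow> w \<in> C \<and> \<tau> w = s"
  unfolding SC_def by auto

lemma SC_mem': "(z, s) \<in> SC \<tau> C \<longleftrightarrow> (\<exists>w. z = Ms w \<and> w \<in> C \<and> \<tau> w = s)"
  unfolding SC_def by auto

lemma fsign_same_site:
  assumes "\<forall>m\<in>T. fst m \<noteq> z"
  shows "fsign T (z, s) = fsign T (z, s')"
proof -
  have "{m' \<in> T. mode_less m' (z, s)} = {m' \<in> T. mode_less m' (z, s')}"
    using assms unfolding mode_less_def by auto
  then show ?thesis unfolding fsign_def by simp
qed

lemma flip_term:
  assumes x: "x \<in> C" "\<tau> x = s" and ss: "s \<noteq> s'"
  shows "cr (Ms x, s) (an (Ms x, s') \<Psi>) (SC \<tau> C) = \<Psi> (SC (\<tau>(x := s')) C)"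
proof -
  let ?S = "SC \<tau> C"
  let ?T = "?S - {(Ms x, s)}"
  have m: "(Ms x, s) \<in> ?S" using x by (simp add: SC_mem)
  have n: "(Ms x, s') \<notin> ?T" using x ss by (auto simp: SC_mem)
  have ins: "insert (Ms x, s') ?T = SC (\<tau>(x := s')) C"
    using x unfolding SC_def by auto
  have site: "\<forall>m\<in>?T. fst m \<noteq> Ms x" using x unfolding SC_def by auto
  have "fsign ?T (Ms x, s) * fsign ?T (Ms x, s') = 1"
    using fsign_same_site[OF site, of s s'] fsign_sq by simp
  then show ?thesis unfolding cr_def an_def using m n ins
    by (simp add: mult.assoc[symmetric])
qed

lemma sum_over_SC:
  assumes fL: "finite L" and CM: "Ms ` C \<subseteq> L" and fC: "finite C"
    and zero: "\<And>z. z \<in> L \<Longrightarrow> (z, s) \<notin> SC \<tau> C \<Longrightarrow> h z = 0"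
  shows "(\<Sum>z\<in>L. h z) = (\<Sum>x\<in>{x\<in>C. \<tau> x = s}. h (Ms x))"
proof -
  have "(\<Sum>z\<in>L. h z) = (\<Sum>z\<in>Ms ` {x\<in>C. \<tau> x = s}. h z)"
  proof (rule sum.mono_neutral_right[OF fL])
    show "Ms ` {x\<in>C. \<tau> x = s} \<subseteq> L" using CM by auto
    show "\<forall>i\<in>L - Ms ` {x \<in> C. \<tau> x = s}. h i = 0"
      using zero unfolding SC_def by auto
  qed
  also have "\<dots> = (\<Sum>x\<in>{x\<in>C. \<tau> x = s}. h (Ms x))"
    by (subst sum.reindex) (auto simp: inj_on_def)
  finally show ?thesis .
qed

lemma Splus_SC:
  assumes fL: "finite L" and CM: "Ms ` C \<subseteq> L" and fC: "finite C"
  shows "Splus L \<Psi> (SC \<tau> C) = sp C (\<lambda>\<tau>. \<Psi> (SC \<tau> C)) \<tau>"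
proof -
  have "Splus L \<Psi> (SC \<tau> C) = (\<Sum>x\<in>{x\<in>C. \<tau> x = Up}. cr (Ms x, Up) (an (Ms x, Dn) \<Psi>) (SC \<tau> C))"
    unfolding Splus_def by (rule sum_over_SC[OF fL CM fC]) (simp add: cr_def)
  also have "\<dots> = sp C (\<lambda>\<tau>. \<Psi> (SC \<tau> C)) \<tau>"
    unfolding sp_def by (rule sum.cong[OF refl]) (simp add: flip_term)
  finally show ?thesis .
qed

lemma Sminus_SC:
  assumes fL: "finite L" and CM: "Ms ` C \<subseteq> L" and fC: "finite C"
  shows "Sminus L \<Psi> (SC \<tau> C) = sm C (\<lambda>\<tau>. \<Psi> (SC \<tau> C)) \<tau>"
proof -
  have "Sminus L \<Psi> (SC \<tau> C) = (\<Sum>x\<in>{x\<in>C. \<tau> x = Dn}. cr (Ms x, Dn) (an (Ms x, Up) \<Psi>) (SC \<tau> C))"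
    unfolding Sminus_def by (rule sum_over_SC[OF fL CM fC]) (simp add: cr_def)
  also have "\<dots> = sm C (\<lambda>\<tau>. \<Psi> (SC \<tau> C)) \<tau>"
    unfolding sm_def by (rule sum.cong[OF refl]) (simp add: flip_term)
  finally show ?thesis .
qed

lemma S3_SC:
  assumes fL: "finite L" and CM: "Ms ` C \<subseteq> L" and fC: "finite C"
  shows "S3 L \<Psi> (SC \<tau> C) = wt C \<tau> * \<Psi> (SC \<tau> C)"
proof -
  have "S3 L \<Psi> (SC \<tau> C) = (\<Sum>z\<in>L. (if (z, Up) \<in> SC \<tau> C then \<Psi> (SC \<tau> C) else 0))/2
     - (\<Sum>z\<in>L. (if (z, Dn) \<in> SC \<tau> C then \<Psi> (SC \<tau> C) else 0))/2"
    unfolding S3_def numop_eq by (simp add: sum_subtractf sum_divide_distrib[symmetric] diff_divide_distrib)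
  also have "(\<Sum>z\<in>L. (if (z, Up) \<in> SC \<tau> C then \<Psi> (SC \<tau> C) else 0)) = (\<Sum>x\<in>{x\<in>C. \<tau> x = Up}. \<Psi> (SC \<tau> C))"
    by (rule trans[OF sum_over_SC[OF fL CM fC]]) (auto simp: SC_mem)
  also have "(\<Sum>z\<in>L. (if (z, Dn) \<in> SC \<tau> C then \<Psi> (SC \<tau> C) else 0)) = (\<Sum>x\<in>{x\<in>C. \<tau> x = Dn}. \<Psi> (SC \<tau> C))"
    by (rule trans[OF sum_over_SC[OF fL CM fC]]) (auto simp: SC_mem)
  finally show ?thesis unfolding wt_def by (simp add: algebra_simps diff_divide_distrib)
qed



lemma set_flip_dn:
  assumes "x \<in> C" "\<tau> x = Up"
  shows "{z\<in>C. (\<tau>(x := Dn)) z = Dn} = insert x {z\<in>C. \<tau> z = Dn}"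
    "{z\<in>C. (\<tau>(x := Dn)) z = Up} = {z\<in>C. \<tau> z = Up} - {x}"
  using assms by auto

lemma set_flip_up:
  assumes "x \<in> C" "\<tau> x = Dn"
  shows "{z\<in>C. (\<tau>(x := Up)) z = Up} = insert x {z\<in>C. \<tau> z = Up}"
    "{z\<in>C. (\<tau>(x := Up)) z = Dn} = {z\<in>C. \<tau> z = Dn} - {x}"
  using assms by auto

lemma wt_flip_dn:
  assumes "finite C" "x \<in> C" "\<tau> x = Up"
  shows "wt C (\<tau>(x := Dn)) = wt C \<tau> - 1"
proof -
  have a: "x \<notin> {z\<in>C. \<tau> z = Dn}" "x \<in> {z\<in>C. \<tau> z = Up}" using assms by auto
  have "card {z\<in>C. \<tau> z = Up} > 0" using a assms(1) by (auto simp: card_gt_0_iff)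
  then show ?thesis unfolding wt_def set_flip_dn[of x C \<tau>, OF assms(2,3)] using assms(1) a
    by (simp add: of_nat_diff field_simps)
qed

lemma wt_flip_up:
  assumes "finite C" "x \<in> C" "\<tau> x = Dn"
  shows "wt C (\<tau>(x := Up)) = wt C \<tau> + 1"
proof -
  have a: "x \<notin> {z\<in>C. \<tau> z = Up}" "x \<in> {z\<in>C. \<tau> z = Dn}" using assms by auto
  have "card {z\<in>C. \<tau> z = Dn} > 0" using a assms(1) by (auto simp: card_gt_0_iff)
  then show ?thesis unfolding wt_def set_flip_up[of x C \<tau>, OF assms(2,3)] using assms(1) a
    by (simp add: of_nat_diff field_simps)
qed

lemma comm_pm:
  assumes fC: "finite C"
  shows "sp C (sm C h) \<tau> = sm C (sp C h) \<tau> + 2 * wt C \<tau> * h \<tau>"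
proof -
  let ?U = "{x\<in>C. \<tau> x = Up}" and ?D = "{x\<in>C. \<tau> x = Dn}"
  have fU: "finite ?U" and fD: "finite ?D" using fC by auto
  have "sp C (sm C h) \<tau> = (\<Sum>x\<in>?U. h \<tau> + (\<Sum>y\<in>?D. h (\<tau>(x := Dn, y := Up))))"
    unfolding sp_def sm_def
  proof (rule sum.cong[OF refl])
    fix x assume x: "x \<in> ?U"
    have nx: "x \<notin> ?D" using x by auto
    have e: "\<tau>(x := Dn, x := Up) = \<tau>" using x by auto
    show "(\<Sum>y\<in>{y\<in>C. (\<tau>(x := Dn)) y = Dn}. h (\<tau>(x := Dn, y := Up))) = h \<tau> + (\<Sum>y\<in>?D. h (\<tau>(x := Dn, y := Up)))"
    proof -
      have "{y\<in>C. (\<tau>(x := Dn)) y = Dn} = insert x ?D" using x by auto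
      then show ?thesis using nx fD e by (simp add: sum.insert)
    qed
  qed
  also have "\<dots> = of_nat (card ?U) * h \<tau> + (\<Sum>x\<in>?U. \<Sum>y\<in>?D. h (\<tau>(x := Dn, y := Up)))"
    by (simp add: sum.distrib)
  finally have 1: "sp C (sm C h) \<tau> = of_nat (card ?U) * h \<tau> + (\<Sum>x\<in>?U. \<Sum>y\<in>?D. h (\<tau>(x := Dn, y := Up)))" .
  have "sm C (sp C h) \<tau> = (\<Sum>y\<in>?D. h \<tau> + (\<Sum>x\<in>?U. h (\<tau>(y := Up, x := Dn))))"
    unfolding sp_def sm_def
  proof (rule sum.cong[OF refl])
    fix y assume y: "y \<in> ?D"
    have ny: "y \<notin> ?U" using y by auto
    have e: "\<tau>(y := Up, y := Dn) = \<tau>" using y by auto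
    show "(\<Sum>x\<in>{x\<in>C. (\<tau>(y := Up)) x = Up}. h (\<tau>(y := Up, x := Dn))) = h \<tau> + (\<Sum>x\<in>?U. h (\<tau>(y := Up, x := Dn)))"
    proof -
      have "{x\<in>C. (\<tau>(y := Up)) x = Up} = insert y ?U" using y by auto
      then show ?thesis using ny fU e by (simp add: sum.insert)
    qed
  qed
  also have "\<dots> = of_nat (card ?D) * h \<tau> + (\<Sum>y\<in>?D. \<Sum>x\<in>?U. h (\<tau>(y := Up, x := Dn)))"
    by (simp add: sum.distrib)
  also have "(\<Sum>y\<in>?D. \<Sum>x\<in>?U. h (\<tau>(y := Up, x := Dn))) = (\<Sum>x\<in>?U. \<Sum>y\<in>?D. h (\<tau>(x := Dn, y := Up)))"
  proof -
    have "(\<Sum>y\<in>?D. \<Sum>x\<in>?U. h (\<tau>(y := Up, x := Dn))) = (\<Sum>y\<in>?D. \<Sum>x\<in>?U. h (\<tau>(x := Dn, y := Up)))"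
    proof (intro sum.cong refl)
      fix y x assume "y \<in> ?D" "x \<in> ?U"
      then have "x \<noteq> y" by auto
      then show "h (\<tau>(y := Up, x := Dn)) = h (\<tau>(x := Dn, y := Up))" by (simp add: fun_upd_twist)
    qed
    then show ?thesis by (simp add: sum.swap[of _ ?D])
  qed
  finally have 2: "sm C (sp C h) \<tau> = of_nat (card ?D) * h \<tau> + (\<Sum>x\<in>?U. \<Sum>y\<in>?D. h (\<tau>(x := Dn, y := Up)))" .
  have w2: "2 * wt C \<tau> * h \<tau> = of_nat (card ?U) * h \<tau> - of_nat (card ?D) * h \<tau>"
    unfolding wt_def by (simp add: field_simps)
  show ?thesis unfolding 1 2 w2 by simp
qed

definition Tc :: "'a set \<Rightarrow> (('a \<Rightarrow> spin) \<Rightarrow> complex) \<Rightarrow> ('a \<Rightarrow> spin) \<Rightarrow> complex" where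
  "Tc C h \<tau> = sm C (sp C h) \<tau> + (wt C \<tau> + (wt C \<tau>)^2) * h \<tau>"

lemma sp_lin: "sp C (\<lambda>\<tau>. a * f \<tau> + b * g \<tau>) \<tau> = a * sp C f \<tau> + b * sp C g \<tau>"
  unfolding sp_def by (simp add: sum.distrib sum_distrib_left)

lemma sm_lin: "sm C (\<lambda>\<tau>. a * f \<tau> + b * g \<tau>) \<tau> = a * sm C f \<tau> + b * sm C g \<tau>"
  unfolding sm_def by (simp add: sum.distrib sum_distrib_left)

lemma sp_wt: 
  assumes "finite C"
  shows "sp C (\<lambda>\<tau>. (wt C \<tau> + (wt C \<tau>)^2) * h \<tau>) \<tau> = ((wt C \<tau> - 1) + (wt C \<tau> - 1)^2) * sp C h \<tau>"
  unfolding sp_def sum_distrib_left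
proof (rule sum.cong[OF refl])
  fix x assume "x \<in> {x\<in>C. \<tau> x = Up}"
  then show "(wt C (\<tau>(x := Dn)) + (wt C (\<tau>(x := Dn)))\<^sup>2) * h (\<tau>(x := Dn)) =
         (wt C \<tau> - 1 + (wt C \<tau> - 1)\<^sup>2) * h (\<tau>(x := Dn))"
    using wt_flip_dn[OF assms, of x \<tau>] by simp
qed

lemma Tc_sp:
  assumes fC: "finite C"
  shows "Tc C (sp C h) \<tau> = sp C (Tc C h) \<tau>"
proof -
  have "sp C (Tc C h) \<tau> = sp C (sm C (sp C h)) \<tau> + sp C (\<lambda>\<tau>. (wt C \<tau> + (wt C \<tau>)^2) * h \<tau>) \<tau>"
    unfolding Tc_def using sp_lin[of C 1 "sm C (sp C h)" 1 "\<lambda>\<tau>. (wt C \<tau> + (wt C \<tau>)^2) * h \<tau>" \<tau>] by simp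
  also have "\<dots> = sm C (sp C (sp C h)) \<tau> + 2 * wt C \<tau> * sp C h \<tau> + ((wt C \<tau> - 1) + (wt C \<tau> - 1)^2) * sp C h \<tau>"
    unfolding comm_pm[OF fC] sp_wt[OF fC] by simp
  also have "\<dots> = Tc C (sp C h) \<tau>" unfolding Tc_def by (simp add: algebra_simps power2_eq_square)
  finally show ?thesis by simp
qed



lemma sp_add_div: "sp C (\<lambda>\<tau>. (f \<tau> + g \<tau>) / c) \<tau> = (sp C f \<tau> + sp C g \<tau>) / c"
  unfolding sp_def by (simp add: sum.distrib sum_divide_distrib[symmetric])
lemma sp_diff_div: "sp C (\<lambda>\<tau>. (f \<tau> - g \<tau>) / c) \<tau> = (sp C f \<tau> - sp C g \<tau>) / c"
  unfolding sp_def by (simp add: sum_subtractf sum_divide_distrib[symmetric])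
lemma sm_add_div: "sm C (\<lambda>\<tau>. (f \<tau> + g \<tau>) / c) \<tau> = (sm C f \<tau> + sm C g \<tau>) / c"
  unfolding sm_def by (simp add: sum.distrib sum_divide_distrib[symmetric])
lemma sm_diff_div: "sm C (\<lambda>\<tau>. (f \<tau> - g \<tau>) / c) \<tau> = (sm C f \<tau> - sm C g \<tau>) / c"
  unfolding sm_def by (simp add: sum_subtractf sum_divide_distrib[symmetric])

lemma Stot_alg:
  assumes fC: "finite C"
  shows "(sp C (\<lambda>\<tau>. (sp C h \<tau> + sm C h \<tau>) / 2) \<tau> + sm C (\<lambda>\<tau>. (sp C h \<tau> + sm C h \<tau>) / 2) \<tau>) / 2
       + (sp C (\<lambda>\<tau>. (sp C h \<tau> - sm C h \<tau>) / (2 * \<i>)) \<tau> - sm C (\<lambda>\<tau>. (sp C h \<tau> - sm C h \<tau>) / (2 * \<i>)) \<tau>) / (2 * \<i>)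
       + wt C \<tau> * (wt C \<tau> * h \<tau>) = Tc C h \<tau>"
proof -
  have "(sp C (\<lambda>\<tau>. (sp C h \<tau> + sm C h \<tau>) / 2) \<tau> + sm C (\<lambda>\<tau>. (sp C h \<tau> + sm C h \<tau>) / 2) \<tau>) / 2
       + (sp C (\<lambda>\<tau>. (sp C h \<tau> - sm C h \<tau>) / (2 * \<i>)) \<tau> - sm C (\<lambda>\<tau>. (sp C h \<tau> - sm C h \<tau>) / (2 * \<i>)) \<tau>) / (2 * \<i>)
      = (sp C (sm C h) \<tau> + sm C (sp C h) \<tau>) / 2"
    unfolding sp_add_div sp_diff_div sm_add_div sm_diff_div by (simp add: field_simps)
  also have "\<dots> = sm C (sp C h) \<tau> + wt C \<tau> * h \<tau>" using comm_pm[OF fC, of h \<tau>] by (simp add: field_simps)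
  finally show ?thesis unfolding Tc_def by (simp add: algebra_simps power2_eq_square)
qed



definition ndn :: "'a set \<Rightarrow> ('a \<Rightarrow> spin) \<Rightarrow> nat" where
  "ndn C \<tau> = card {x\<in>C. \<tau> x = Dn}"

definition sw :: "'a \<Rightarrow> 'a \<Rightarrow> ('a \<Rightarrow> spin) \<Rightarrow> ('a \<Rightarrow> spin)" where
  "sw x y \<tau> = \<tau>(x := \<tau> y, y := \<tau> x)"

definition symm :: "'a set \<Rightarrow> (('a \<Rightarrow> spin) \<Rightarrow> complex) \<Rightarrow> bool" where
  "symm C0 h \<longleftrightarrow> (\<forall>x\<in>C0. \<forall>y\<in>C0. \<forall>\<tau>. h (sw x y \<tau>) = h \<tau>)"

lemma ndn_flip_dn: "finite C \<Longrightarrow> x \<in> C \<Longrightarrow> \<tau> x = Up \<Longrightarrow> ndn C (\<tau>(x := Dn)) = Suc (ndn C \<tau>)"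
  unfolding ndn_def set_flip_dn(1)[of x C \<tau>] by auto

lemma ndn_flip_up: "finite C \<Longrightarrow> x \<in> C \<Longrightarrow> \<tau> x = Dn \<Longrightarrow> Suc (ndn C (\<tau>(x := Up))) = ndn C \<tau>"
proof -
  assume a: "finite C" "x \<in> C" "\<tau> x = Dn"
  have "{z\<in>C. \<tau> z = Dn} = insert x {z\<in>C. (\<tau>(x := Up)) z = Dn}" using a by auto
  then show ?thesis unfolding ndn_def using a by simp
qed

lemma wt_ndn:
  assumes "finite C"
  shows "wt C \<tau> = (of_nat (card C) - 2 * of_nat (ndn C \<tau>)) / 2"
proof -
  have "card C = card {x\<in>C. \<tau> x = Up} + card {x\<in>C. \<tau> x = Dn}"
  proof -
    have "C = {x\<in>C. \<tau> x = Up} \<union> {x\<in>C. \<tau> x = Dn}" by (auto intro: spin.exhaust)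
    moreover have "{x\<in>C. \<tau> x = Up} \<inter> {x\<in>C. \<tau> x = Dn} = {}" by auto
    ultimately show ?thesis using assms by (metis card_Un_disjoint finite_Un)
  qed
  then show ?thesis unfolding wt_def ndn_def by (simp add: field_simps)
qed

lemma sp_proj:
  assumes "finite C"
  shows "sp C (\<lambda>\<tau>. if ndn C \<tau> = d then f \<tau> else 0) \<tau> = (if Suc (ndn C \<tau>) = d then sp C f \<tau> else 0)"
  unfolding sp_def using ndn_flip_dn[OF assms] by (auto intro!: sum.neutral)

lemma sm_proj:
  assumes "finite C"
  shows "sm C (\<lambda>\<tau>. if Suc (ndn C \<tau>) = d then f \<tau> else 0) \<tau> = (if ndn C \<tau> = d then sm C f \<tau> else 0)"
  unfolding sm_def using ndn_flip_up[OF assms] by (auto intro!: sum.neutral)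

lemma Tc_proj:
  assumes fC: "finite C"
  shows "Tc C (\<lambda>\<tau>. if ndn C \<tau> = d then f \<tau> else 0) \<tau> = (if ndn C \<tau> = d then Tc C f \<tau> else 0)"
proof -
  have "sp C (\<lambda>\<tau>. if ndn C \<tau> = d then f \<tau> else 0) = (\<lambda>\<tau>. if Suc (ndn C \<tau>) = d then sp C f \<tau> else 0)"
    using sp_proj[OF fC] by auto
  then show ?thesis unfolding Tc_def using sm_proj[OF fC, of d "sp C f" \<tau>] by simp
qed

lemma sw_comp: "sw x y \<tau> = \<tau> \<circ> (\<lambda>z. if z = x then y else if z = y then x else z)"
  unfolding sw_def by (auto simp: fun_eq_iff)

lemma sp_symm:
  assumes fC: "finite C" and C0: "C0 \<subseteq> C" and h: "symm C0 h"
  shows "symm C0 (sp C h)"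
  unfolding symm_def
proof (intro ballI allI)
  fix x y \<tau> assume x: "x \<in> C0" and y: "y \<in> C0"
  define p where "p = (\<lambda>z. if z = x then y else if z = y then x else z)"
  have pp: "p (p z) = z" for z unfolding p_def by auto
  have ip: "inj p" by (metis pp injI)
  have swp: "sw x y \<tau>' = \<tau>' \<circ> p" for \<tau>' unfolding sw_comp p_def ..
  have pC: "z \<in> C \<longleftrightarrow> p z \<in> C" for z using x y C0 unfolding p_def by auto
  have U: "{z\<in>C. sw x y \<tau> z = Up} = p ` {z\<in>C. \<tau> z = Up}"
  proof -
    have "{z\<in>C. sw x y \<tau> z = Up} = {z. p z \<in> C \<and> \<tau> (p z) = Up}" unfolding swp using pC by auto
    also have "\<dots> = p ` {z\<in>C. \<tau> z = Up}" using pp by (auto simp: image_iff) (metis pp)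
    finally show ?thesis .
  qed
  have e: "(sw x y \<tau>)(p w := Dn) = sw x y (\<tau>(w := Dn))" for w
    unfolding swp by (auto simp: fun_eq_iff pp)
  have "sp C h (sw x y \<tau>) = (\<Sum>z\<in>p ` {z\<in>C. \<tau> z = Up}. h ((sw x y \<tau>)(z := Dn)))"
    unfolding sp_def U ..
  also have "\<dots> = (\<Sum>w\<in>{z\<in>C. \<tau> z = Up}. h ((sw x y \<tau>)(p w := Dn)))"
    by (subst sum.reindex) (use ip in \<open>auto simp: inj_on_def\<close>)
  also have "\<dots> = (\<Sum>w\<in>{z\<in>C. \<tau> z = Up}. h (\<tau>(w := Dn)))"
    unfolding e using h x y unfolding symm_def by auto
  finally show "sp C h (sw x y \<tau>) = sp C h \<tau>" unfolding sp_def .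
qed

lemma proj_symm:
  assumes "C0 \<subseteq> C" "symm C0 f"
  shows "symm C0 (\<lambda>\<tau>. if ndn C \<tau> = d then f \<tau> else 0)"
proof -
  have "ndn C (sw x y \<tau>) = ndn C \<tau>" if "x \<in> C" "y \<in> C" for x y \<tau>
  proof -
    define p where "p = (\<lambda>z. if z = x then y else if z = y then x else z)"
    have pp: "p (p z) = z" for z unfolding p_def by auto
    have "{z\<in>C. sw x y \<tau> z = Dn} = p ` {z\<in>C. \<tau> z = Dn}"
      using that pp unfolding sw_comp p_def[symmetric] by (auto simp: image_iff p_def) 
    moreover have "inj p" by (metis pp injI)
    ultimately show ?thesis unfolding ndn_def by (simp add: card_image inj_on_subset)
  qed
  then show ?thesis unfolding symm_def
  proof (intro ballI allI)
    fix x y \<tau> assume "x \<in> C0" "y \<in> C0"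
    moreover have "ndn C (sw x y \<tau>) = ndn C \<tau>" using calculation assms(1) \<open>\<And>x y \<tau>. x \<in> C \<Longrightarrow> y \<in> C \<Longrightarrow> ndn C (sw x y \<tau>) = ndn C \<tau>\<close> by blast
    ultimately show "(if ndn C (sw x y \<tau>) = d then f (sw x y \<tau>) else 0) = (if ndn C \<tau> = d then f \<tau> else 0)"
      using assms(2) unfolding symm_def by simp
  qed
qed


lemma highest_weight:
  assumes fC: "finite C" and C0: "C0 \<subseteq> C"
    and hom: "\<And>\<tau>. w \<tau> \<noteq> 0 \<Longrightarrow> ndn C \<tau> = d"
    and top: "\<And>\<tau>. sp C w \<tau> = 0"
    and sy: "symm C0 w" and nz: "w \<tau>0 \<noteq> 0"
  shows "d \<le> card (C - C0)"
proof (rule ccontr)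
  assume dgt: "\<not> d \<le> card (C - C0)"
  define kk where "kk \<tau> = card {x\<in>C - C0. \<tau> x = Dn}" for \<tau>
  define K where "K = kk ` {\<tau>. w \<tau> \<noteq> 0}"
  have fK: "finite K" unfolding K_def kk_def
    by (rule finite_subset[of _ "{..card (C - C0)}"]) (auto intro!: card_mono simp: fC)
  have "kk \<tau>0 \<in> K" unfolding K_def using nz by auto
  then have "Max K \<in> K" using Max_in[OF fK] by auto
  then obtain \<tau> where t0: "\<tau> \<in> {\<tau>. w \<tau> \<noteq> 0}" "Max K = kk \<tau>" unfolding K_def by (rule imageE)
  have t: "w \<tau> \<noteq> 0" "kk \<tau> = Max K" using t0 by simp_all
  have kmax: "kk \<tau>' \<le> kk \<tau>" if "w \<tau>' \<noteq> 0" for \<tau>'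
  proof -
    have "kk \<tau>' \<in> K" unfolding K_def using that by blast
    then show ?thesis using Max_ge[OF fK] t(2) by simp
  qed
  have "ndn C \<tau> = card {x\<in>C0. \<tau> x = Dn} + kk \<tau>"
  proof -
    have "{x\<in>C. \<tau> x = Dn} = {x\<in>C0. \<tau> x = Dn} \<union> {x\<in>C - C0. \<tau> x = Dn}" using C0 by auto
    moreover have "finite C0" using fC C0 finite_subset by auto
    ultimately show ?thesis unfolding ndn_def kk_def using fC
      by (subst card_Un_disjoint[symmetric]) auto
  qed
  moreover have "kk \<tau> \<le> card (C - C0)" unfolding kk_def using fC by (auto intro!: card_mono)
  ultimately have "card {x\<in>C0. \<tau> x = Dn} > 0" using hom[OF t(1)] dgt by auto
  then obtain x where x: "x \<in> C0" "\<tau> x = Dn" by (auto simp: card_gt_0_iff)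
  define \<tau>' where "\<tau>' = \<tau>(x := Up)"
  have "sp C w \<tau>' = (\<Sum>y\<in>{y\<in>C. \<tau>' y = Up}. w (\<tau>'(y := Dn)))" unfolding sp_def ..
  also have "\<dots> = (\<Sum>y\<in>{y\<in>C0. \<tau>' y = Up}. w \<tau>)"
  proof (rule sum.mono_neutral_cong_right)
    show "finite {y\<in>C. \<tau>' y = Up}" using fC by auto
    show "{y\<in>C0. \<tau>' y = Up} \<subseteq> {y\<in>C. \<tau>' y = Up}" using C0 by auto
    show "\<forall>y\<in>{y\<in>C. \<tau>' y = Up} - {y\<in>C0. \<tau>' y = Up}. w (\<tau>'(y := Dn)) = 0"
    proof (intro ballI, rule ccontr)
      fix y assume y: "y \<in> {y\<in>C. \<tau>' y = Up} - {y\<in>C0. \<tau>' y = Up}" and "w (\<tau>'(y := Dn)) \<noteq> 0"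
      then have le: "kk (\<tau>'(y := Dn)) \<le> kk \<tau>" using kmax by auto
      have yx1: "y \<noteq> x" "y \<in> C - C0" using y x unfolding \<tau>'_def by auto
      then have yx: "y \<noteq> x" "y \<in> C - C0" "\<tau> y = Up" using y unfolding \<tau>'_def by auto
      have "{z\<in>C - C0. (\<tau>'(y := Dn)) z = Dn} = insert y {z\<in>C - C0. \<tau> z = Dn}"
        using yx x unfolding \<tau>'_def by auto
      moreover have "y \<notin> {z\<in>C - C0. \<tau> z = Dn}" using yx by auto
      ultimately have "kk (\<tau>'(y := Dn)) = Suc (kk \<tau>)" unfolding kk_def using fC by simp
      then show False using le by simp
    qed
    fix y assume y: "y \<in> {y\<in>C0. \<tau>' y = Up}"
    show "w (\<tau>'(y := Dn)) = w \<tau>"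
    proof (cases "y = x")
      case True
      then have "\<tau>'(y := Dn) = \<tau>" unfolding \<tau>'_def using x by auto
      then show ?thesis by simp
    next
      case False
      then have "\<tau>'(y := Dn) = sw x y \<tau>" using y x unfolding \<tau>'_def sw_def by (auto simp: fun_eq_iff)
      then show ?thesis using sy x y unfolding symm_def by auto
    qed
  qed
  also have "\<dots> = of_nat (card {y\<in>C0. \<tau>' y = Up}) * w \<tau>" by simp
  finally have "sp C w \<tau>' = of_nat (card {y\<in>C0. \<tau>' y = Up}) * w \<tau>" .
  moreover have "card {y\<in>C0. \<tau>' y = Up} > 0"
  proof -
    have "finite C0" using fC C0 finite_subset by auto
    moreover have "x \<in> {y\<in>C0. \<tau>' y = Up}" using x unfolding \<tau>'_def by auto
    ultimately show ?thesis by (subst card_gt_0_iff) auto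
  qed
  ultimately have "sp C w \<tau>' \<noteq> 0" using t(1) by simp
  then show False using top by simp
qed



lemma sp_scale: "sp C (\<lambda>\<tau>. c * h \<tau>) \<tau> = c * sp C h \<tau>"
  unfolding sp_def by (simp add: sum_distrib_left)

lemma spin_bound:
  assumes fC: "finite C" and C0: "C0 \<subseteq> C"
    and eig: "\<And>\<tau>. Tc C f \<tau> = lam * f \<tau>" and nz: "f \<sigma> \<noteq> 0" and sy: "symm C0 f"
  shows "\<exists>d. d \<le> card (C - C0) \<and>
     lam = (of_nat (card C) - 2 * of_nat d) / 2 + ((of_nat (card C) - 2 * of_nat d) / 2)^2"
proof -
  define d0 where "d0 = ndn C \<sigma>"
  define g0 where "g0 = (\<lambda>\<tau>. if ndn C \<tau> = d0 then f \<tau> else 0)"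
  define g where "g k = (sp C ^^ k) g0" for k
  have gS: "g (Suc k) = sp C (g k)" for k unfolding g_def by simp
  have inv: "(\<forall>\<tau>. Tc C (g k) \<tau> = lam * g k \<tau>) \<and> (\<forall>\<tau>. g k \<tau> \<noteq> 0 \<longrightarrow> ndn C \<tau> + k = d0) \<and> symm C0 (g k)" for k
  proof (induction k)
    case 0
    have "Tc C g0 \<tau> = lam * g0 \<tau>" for \<tau> unfolding g0_def Tc_proj[OF fC] eig by simp
    moreover have "symm C0 g0" unfolding g0_def by (rule proj_symm[OF C0 sy])
    ultimately show ?case unfolding g_def g0_def by auto
  next
    case (Suc k)
    have Tk: "Tc C (g k) = (\<lambda>\<tau>. lam * g k \<tau>)" using Suc by auto
    have a: "Tc C (g (Suc k)) \<tau> = lam * g (Suc k) \<tau>" for \<tau>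
      unfolding gS Tc_sp[OF fC] Tk sp_scale ..
    have b: "ndn C \<tau> + Suc k = d0" if "g (Suc k) \<tau> \<noteq> 0" for \<tau>
    proof -
      from that obtain x where x: "x \<in> C" "\<tau> x = Up" "g k (\<tau>(x := Dn)) \<noteq> 0"
        unfolding gS sp_def by (metis (mono_tags, lifting) mem_Collect_eq sum.neutral)
      then have "ndn C (\<tau>(x := Dn)) + k = d0" using Suc by auto
      then show ?thesis using ndn_flip_dn[of C x \<tau>, OF fC x(1,2)] by simp
    qed
    have c: "symm C0 (g (Suc k))" unfolding gS using sp_symm[OF fC C0] Suc by auto
    show ?case using a b c by auto
  qed
  define P where "P k = (\<forall>\<tau>. g (Suc k) \<tau> = 0)" for k
  have Pd0: "P d0" unfolding P_def using inv[of "Suc d0"] by auto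
  define k0 where "k0 = (LEAST k. P k)"
  have Pk0: "P k0" unfolding k0_def using Pd0 by (rule LeastI)
  have "\<exists>\<tau>. g k0 \<tau> \<noteq> 0"
  proof (cases k0)
    case 0
    have "g 0 \<sigma> \<noteq> 0" unfolding g_def g0_def d0_def using nz by simp
    then show ?thesis using 0 by auto
  next
    case (Suc k')
    then have "\<not> P k'" unfolding k0_def using not_less_Least[of k' P] by auto
    then show ?thesis unfolding P_def using Suc by auto
  qed
  then obtain \<tau> where t: "g k0 \<tau> \<noteq> 0" by auto
  have top: "sp C (g k0) \<tau>' = 0" for \<tau>' using Pk0 unfolding P_def gS by auto
  have hom: "ndn C \<tau>' = ndn C \<tau>" if "g k0 \<tau>' \<noteq> 0" for \<tau>'
  proof -
    have "\<forall>\<tau>. g k0 \<tau> \<noteq> 0 \<longrightarrow> ndn C \<tau> + k0 = d0" using inv[of k0] by blast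
    then have "ndn C \<tau>' + k0 = d0" "ndn C \<tau> + k0 = d0" using that t by auto
    then show ?thesis by simp
  qed
  have d: "ndn C \<tau> \<le> card (C - C0)"
    by (rule highest_weight[OF fC C0 hom top _ t]) (use inv in auto)
  have spz: "sp C (g k0) = (\<lambda>_. 0)" using top by auto
  have "Tc C (g k0) \<tau> = (wt C \<tau> + (wt C \<tau>)^2) * g k0 \<tau>"
    unfolding Tc_def spz sm_def by simp
  then have "lam = wt C \<tau> + (wt C \<tau>)^2" using inv[of k0] t by auto
  then show ?thesis using d wt_ndn[OF fC, of \<tau>] by auto
qed



lemma sw_same: "sw x x \<tau> = \<tau>" unfolding sw_def by auto
lemma sw_comm: "sw x y \<tau> = sw y x \<tau>" unfolding sw_def by (auto simp: fun_eq_iff)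
lemma sw_conj: "x \<noteq> w \<Longrightarrow> w \<noteq> y \<Longrightarrow> x \<noteq> y \<Longrightarrow> sw x y \<tau> = sw x w (sw w y (sw x w \<tau>))"
  unfolding sw_def by (auto simp: fun_eq_iff)

lemma path_sym:
  assumes edge: "\<And>a b \<tau>. (a, b) \<in> E \<Longrightarrow> f (sw a b \<tau>) = f \<tau>"
    and p: "(x, y) \<in> E\<^sup>*"
  shows "f (sw x y \<tau>) = f \<tau>"
  using p
proof (induction arbitrary: \<tau> rule: rtrancl_induct)
  case base then show ?case by (simp add: sw_same)
next
  case (step w y)
  show ?case
  proof (cases "y = x")
    case True then show ?thesis by (simp add: sw_same)
  next
    case yx: False
    show ?thesis
    proof (cases "w = x")
      case True then show ?thesis using edge step by simp
    next
      case wx: False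
      show ?thesis
      proof (cases "w = y")
        case True then show ?thesis using step by simp
      next
        case False
        have "f (sw x y \<tau>) = f (sw x w (sw w y (sw x w \<tau>)))" using sw_conj[of x w y] wx False yx by metis
        also have "\<dots> = f (sw w y (sw x w \<tau>))" using step.IH by simp
        also have "\<dots> = f (sw x w \<tau>)" using edge step by simp
        also have "\<dots> = f \<tau>" using step.IH by simp
        finally show ?thesis .
      qed
    qed
  qed
qed

lemma rtrancl_restrict_in: "(x, y) \<in> (E \<inter> C \<times> C)\<^sup>* \<Longrightarrow> x \<in> C \<Longrightarrow> y \<in> C"
  by (induction rule: rtrancl_induct) auto

lemma edges_sym: "sym (edges B \<inter> C \<times> C)"
  unfolding edges_def sym_def by auto

lemma comp_facts:
  assumes fC: "finite C" and C0: "C0 \<in> components B C"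
  shows "C0 \<subseteq> C" "finite (components B C)"
    "(\<Sum>D\<in>components B C - {C0}. card D) = card (C - C0)"
    "\<forall>x\<in>C0. \<forall>y\<in>C0. (x, y) \<in> (edges B \<inter> C \<times> C)\<^sup>*"
proof -
  let ?R = "(edges B \<inter> C \<times> C)\<^sup>*"
  have eq: "equiv UNIV ?R"
    unfolding equiv_def using refl_rtrancl trans_rtrancl sym_rtrancl[OF edges_sym] by auto
  have sub: "?R `` {x} \<subseteq> C" if "x \<in> C" for x using rtrancl_restrict_in that by fastforce
  have cq: "components B C \<subseteq> UNIV // ?R" unfolding components_def quotient_def by auto
  show C0C: "C0 \<subseteq> C" using C0 sub unfolding components_def by auto
  show fc: "finite (components B C)" unfolding components_def
  proof -
    have "{?R `` {x} |x. x \<in> C} = (\<lambda>x. ?R `` {x}) ` C" by auto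
    then show "finite {?R `` {x} |x. x \<in> C}" using fC by simp
  qed
  have U: "\<Union> (components B C) = C" unfolding components_def using sub by auto
  have fm: "finite D" if "D \<in> components B C" for D
    using that sub fC finite_subset unfolding components_def by blast
  have pd: "pairwise disjnt (components B C)"
    unfolding pairwise_def disjnt_def using quotient_disj[OF eq] cq by blast
  have "card C = (\<Sum>D\<in>components B C. card D)"
    using card_Union_disjoint[OF pd fm] U by simp
  also have "\<dots> = card C0 + (\<Sum>D\<in>components B C - {C0}. card D)"
    using sum.remove[OF fc C0] by simp
  finally show "(\<Sum>D\<in>components B C - {C0}. card D) = card (C - C0)"
    using card_Diff_subset[OF finite_subset[OF C0C fC] C0C] by simp
  show "\<forall>x\<in>C0. \<forall>y\<in>C0. (x, y) \<in> ?R"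
  proof (intro ballI)
    fix x y assume "x \<in> C0" "y \<in> C0"
    then obtain x0 where "(x0, x) \<in> ?R" "(x0, y) \<in> ?R" using C0 unfolding components_def by auto
    then show "(x, y) \<in> ?R" using eq unfolding equiv_def sym_def trans_def by blast
  qed
qed



theorem lemma1:
  fixes M :: "'a::linorder set" and B :: "('a \<times> 'a) set" and \<zeta> :: nat
    and \<mu> t \<nu> :: real and Ne :: nat and \<Phi> :: "'a fock"
    and \<psi> :: "'a set \<Rightarrow> ('a \<Rightarrow> spin) \<Rightarrow> complex"
    and C :: "'a set" and \<sigma> :: "'a \<Rightarrow> spin"
  assumes lat: "lattice M B \<zeta>"
    and mu: "\<mu> > 0" and tpos: "t > 0"
    and nu: "0 < \<nu>" "\<nu> < 1"
    and Ne: "Ne \<le> card M"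
    and space: "in_space M B Ne \<Phi>"
    and fe: "finite_energy M B \<zeta> \<mu> t \<Phi>"
    and eig: "\<Phi> \<noteq> (\<lambda>_. 0)"
      "\<exists>Stot::real. 0 \<le> Stot \<and> Stot \<le> \<nu> * (real Ne / 2)
         \<and> Stot2 (Lam M B) \<Phi> = (\<lambda>S. complex_of_real (Stot * (Stot + 1)) * \<Phi> S)"
    and expand: "\<Phi> = (\<lambda>S. \<Sum>D\<in>{D. D \<subseteq> M \<and> card D = Ne}.
                      \<Sum>\<tau>\<in>Pi\<^sub>E D (\<lambda>_. {Up, Dn}). \<psi> D \<tau> * aprod M B \<zeta> \<mu> D \<tau> S)"
    and C: "C \<subseteq> M" "card C = Ne" "\<sigma> \<in> Pi\<^sub>E C (\<lambda>_. {Up, Dn})" "\<psi> C \<sigma> \<noteq> 0"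
  shows "\<forall>C0\<in>components B C. (\<forall>D\<in>components B C. card D \<le> card C0) \<longrightarrow>
           real (\<Sum>D\<in>components B C - {C0}. card D) \<ge> real Ne / 2 * (1 - \<nu>)"
proof (intro ballI impI)
  fix C0 assume C0: "C0 \<in> components B C"
  obtain Stot :: real where St: "0 \<le> Stot" "Stot \<le> \<nu> * (real Ne / 2)"
    "Stot2 (Lam M B) \<Phi> = (\<lambda>S. complex_of_real (Stot * (Stot + 1)) * \<Phi> S)"
    using eig(2) by blast
  have fM: "finite M" and fL: "finite (Lam M B)" using lattice_fin[OF lat] by auto
  have fC: "finite C" using fM C(1) finite_subset by auto
  have CM: "Ms ` C \<subseteq> Lam M B" using C(1) Ms_Lam[of _ M B] by auto
  note cf = comp_facts[OF fC C0]
  define f where "f \<tau> = \<Phi> (SC \<tau> C)" for \<tau>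
  let ?L = "Lam M B"
  have pS1: "(\<lambda>\<tau>. S1 ?L X (SC \<tau> C)) = (\<lambda>\<tau>. (sp C (\<lambda>\<tau>. X (SC \<tau> C)) \<tau> + sm C (\<lambda>\<tau>. X (SC \<tau> C)) \<tau>) / 2)" for X
    unfolding S1_def Splus_SC[OF fL CM fC] Sminus_SC[OF fL CM fC] ..
  have pS2: "(\<lambda>\<tau>. S2 ?L X (SC \<tau> C)) = (\<lambda>\<tau>. (sp C (\<lambda>\<tau>. X (SC \<tau> C)) \<tau> - sm C (\<lambda>\<tau>. X (SC \<tau> C)) \<tau>) / (2 * \<i>))" for X
    unfolding S2_def Splus_SC[OF fL CM fC] Sminus_SC[OF fL CM fC] ..
  have pS3: "(\<lambda>\<tau>. S3 ?L X (SC \<tau> C)) = (\<lambda>\<tau>. wt C \<tau> * X (SC \<tau> C))" for X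
    unfolding S3_SC[OF fL CM fC] ..
  have eigf: "Tc C f \<tau> = complex_of_real (Stot * (Stot + 1)) * f \<tau>" for \<tau>
  proof -
    have "Stot2 ?L \<Phi> (SC \<tau> C) = S1 ?L (S1 ?L \<Phi>) (SC \<tau> C) + S2 ?L (S2 ?L \<Phi>) (SC \<tau> C) + S3 ?L (S3 ?L \<Phi>) (SC \<tau> C)"
      unfolding Stot2_def ..
    also have "S1 ?L (S1 ?L \<Phi>) (SC \<tau> C) = (sp C (\<lambda>\<tau>. (sp C f \<tau> + sm C f \<tau>) / 2) \<tau> + sm C (\<lambda>\<tau>. (sp C f \<tau> + sm C f \<tau>) / 2) \<tau>) / 2"
      using fun_cong[OF pS1[of "S1 ?L \<Phi>"], of \<tau>] pS1[of \<Phi>] unfolding f_def by simp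
    also have "S2 ?L (S2 ?L \<Phi>) (SC \<tau> C) = (sp C (\<lambda>\<tau>. (sp C f \<tau> - sm C f \<tau>) / (2 * \<i>)) \<tau> - sm C (\<lambda>\<tau>. (sp C f \<tau> - sm C f \<tau>) / (2 * \<i>)) \<tau>) / (2 * \<i>)"
      using fun_cong[OF pS2[of "S2 ?L \<Phi>"], of \<tau>] pS2[of \<Phi>] unfolding f_def by simp
    also have "S3 ?L (S3 ?L \<Phi>) (SC \<tau> C) = wt C \<tau> * (wt C \<tau> * f \<tau>)"
      using fun_cong[OF pS3[of "S3 ?L \<Phi>"], of \<tau>] fun_cong[OF pS3[of \<Phi>], of \<tau>] unfolding f_def by simp
    finally have "Stot2 ?L \<Phi> (SC \<tau> C) = Tc C f \<tau>" using Stot_alg[OF fC, of f \<tau>] by simp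
    then show ?thesis using St(3) unfolding f_def by simp
  qed
  have fval: "f \<tau> = \<psi> C (restrict \<tau> C) * of_real (NN \<mu> \<zeta>) ^ Ne" for \<tau>
    unfolding f_def by (rule extract_coef[OF lat expand C(1,2)])
  have "restrict \<sigma> C = \<sigma>" using C(3) by (simp add: PiE_restrict)
  then have fnz: "f \<sigma> \<noteq> 0" using fval[of \<sigma>] C(4) NN_pos[of \<zeta> \<mu>] by simp
  have edge: "f (sw a b \<tau>) = f \<tau>" if ab: "(a, b) \<in> edges B \<inter> C \<times> C" for a b \<tau>
  proof -
    have ss: "\<psi> C (restrict (sw x y \<tau>') C) = \<psi> C (restrict \<tau>' C)" if "(x, y) \<in> B" "x \<in> C" "y \<in> C" for x y \<tau>'
      using swap_sym[OF lat mu fe expand C(1,2) that, of \<tau>'] unfolding sw_def .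
    from ab have "(a, b) \<in> B \<or> (b, a) \<in> B" "a \<in> C" "b \<in> C" unfolding edges_def by auto
    then have "\<psi> C (restrict (sw a b \<tau>) C) = \<psi> C (restrict \<tau> C)"
    proof (elim conjE disjE)
      assume "(a, b) \<in> B" "a \<in> C" "b \<in> C" then show ?thesis using ss[of a b \<tau>] by blast
    next
      assume "(b, a) \<in> B" "a \<in> C" "b \<in> C" then show ?thesis using ss[of b a \<tau>] sw_comm[of a b \<tau>] by simp
    qed
    then show ?thesis unfolding fval by simp
  qed
  have sy: "symm C0 f" unfolding symm_def
  proof (intro ballI allI)
    fix x y \<tau> assume "x \<in> C0" "y \<in> C0"
    then have "(x, y) \<in> (edges B \<inter> C \<times> C)\<^sup>*" using cf(4) by blast
    then show "f (sw x y \<tau>) = f \<tau>" using path_sym[of "edges B \<inter> C \<times> C" f x y \<tau>] edge by blast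
  qed
  obtain d where d: "d \<le> card (C - C0)" and lam: "complex_of_real (Stot * (Stot + 1)) =
     (of_nat (card C) - 2 * of_nat d) / 2 + ((of_nat (card C) - 2 * of_nat d) / 2)^2"
    using spin_bound[OF fC cf(1) eigf fnz sy] by blast
  define m :: real where "m = (real Ne - 2 * real d) / 2"
  have "complex_of_real (Stot * (Stot + 1)) = complex_of_real (m + m^2)"
    unfolding lam m_def C(2)[symmetric] by simp
  then have lamr: "Stot * (Stot + 1) = m + m^2" using of_real_eq_iff by blast
  show "real Ne / 2 * (1 - \<nu>) \<le> real (\<Sum>D\<in>components B C - {C0}. card D)"
  proof (rule ccontr)
    assume "\<not> ?thesis"
    then have lt: "real (card (C - C0)) < real Ne / 2 * (1 - \<nu>)" using cf(3) by simp
    have "m \<ge> real Ne / 2 - real (card (C - C0))" unfolding m_def using d by simp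
    then have "m > \<nu> * (real Ne / 2)" using lt by (simp add: algebra_simps)
    then have mS: "m > Stot" using St(2) by simp
    moreover have "m^2 > Stot^2" using mS St(1) by (intro power_strict_mono) auto
    ultimately have "m + m^2 > Stot * (Stot + 1)" by (simp add: algebra_simps power2_eq_square)
    then show False using lamr by simp
  qed
qed


end
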